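(* Let $\xi\in\mathbb{R}\setminus\mathbb{Q}$, let $n\ge1$ be an integer, and let $q$ be the denominator of a convergent of the continued fraction expansion of $\xi$. Put $c_5 = (n+1)2^{n+1}$. Then there exist an irreducible polynomial $P \in \mathbb{Z}[T]$ of degree $n$ and an irreducible monic polynomial $Q \in \mathbb{Z}[T]$ of degree $n+1$ such that \[ c_5 q^{2k-n} \le |P^{[k]}(\xi)| \le 3c_5 q^{2k-n} \quad\text{and}\quad c_5 q^{2k-n} \le |Q^{[k]}(\xi)| \le 3c_5 q^{2k-n} \qquad (0\le k\le n). \]
   Context: For $P \in \mathbb{R}[T]$ and $k\ge0$, $P^{[k]}(\xi) = P^{(k)}(\xi)/k!$ denotes the $k$-th divided derivative of $P$ at $\xi$ (the coefficient of $(T-\xi)^k$ in the Taylor expansion of $P$ at $\xi$). *)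

theory Defs
  imports "HOL-Analysis.Analysis" "HOL-Computational_Algebra.Polynomial"
begin

fun cf_rem :: "real \<Rightarrow> nat \<Rightarrow> real" where
  "cf_rem x 0 = x"
| "cf_rem x (Suc k) = 1 / (cf_rem x k - of_int \<lfloor>cf_rem x k\<rfloor>)"

definition cf_quot :: "real \<Rightarrow> nat \<Rightarrow> int" where
  "cf_quot x k = \<lfloor>cf_rem x k\<rfloor>"

fun cf_den :: "real \<Rightarrow> nat \<Rightarrow> int" where
  "cf_den x 0 = 1"
| "cf_den x (Suc 0) = cf_quot x 1"
| "cf_den x (Suc (Suc k)) = cf_quot x (Suc (Suc k)) * cf_den x (Suc k) + cf_den x k"

definition div_deriv :: "int poly \<Rightarrow> nat \<Rightarrow> real \<Rightarrow> real" where
  "div_deriv P k \<xi> = poly ((pderiv ^^ k) (map_poly real_of_int P)) \<xi> / fact k"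

end

theory Submission
  imports Defs
begin

definition dd :: "real poly \<Rightarrow> nat \<Rightarrow> real \<Rightarrow> real" where
  "dd R k x = poly ((pderiv ^^ k) R) x / fact k"

lemma div_deriv_dd: "div_deriv P k x = dd (map_poly real_of_int P) k x"
  by (simp add: div_deriv_def dd_def)

lemma pderiv_iter_add: "(pderiv ^^ k) (A + B) = (pderiv ^^ k) A + (pderiv ^^ k) (B::real poly)"
  by (induction k) (auto simp: pderiv_add)

lemma pderiv_iter_smult: "(pderiv ^^ k) (smult c A) = smult c ((pderiv ^^ k) (A::real poly))"
  by (induction k) (auto simp: pderiv_smult)

lemma pderiv_iter_0: "(pderiv ^^ k) (0::real poly) = 0"
  by (induction k) auto

lemma dd_add: "dd (A + B) k x = dd A k x + dd B k x"
  by (simp add: dd_def pderiv_iter_add add_divide_distrib)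

lemma dd_smult: "dd (smult c A) k x = c * dd A k x"
  by (simp add: dd_def pderiv_iter_smult)

lemma dd_0: "dd 0 k x = 0"
  by (simp add: dd_def pderiv_iter_0)

lemma dd_sum: "dd (\<Sum>i\<in>I. f i) k x = (\<Sum>i\<in>I. dd (f i) k x)"
  by (induction I rule: infinite_finite_induct) (auto simp: dd_add dd_0)

lemma dd_diff: "dd (A - B) k x = dd A k x - dd B k x"
proof -
  have "A = (A - B) + B" by simp
  then have "dd A k x = dd (A - B) k x + dd B k x" by (metis dd_add)
  then show ?thesis by simp
qed

lemma pderiv_lin: "pderiv [:c0, c1:] = [:c1::real:]"
  by (simp add: pderiv_pCons)

lemma pderiv_iter_mult_lin_gen:
  assumes L: "pderiv L = [:c1:]"
  shows "(pderiv ^^ Suc k) (F * L) =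
     (pderiv ^^ Suc k) F * L + smult (of_nat (Suc k) * c1) ((pderiv ^^ k) (F::real poly))"
proof (induction k)
  case 0
  have "pderiv (F * L) = F * [:c1:] + L * pderiv F" by (simp only: pderiv_mult L)
  then show ?case by (simp add: algebra_simps)
next
  case (Suc k)
  have "(pderiv ^^ Suc (Suc k)) (F * L) = pderiv ((pderiv ^^ Suc k) (F * L))"
    by simp
  also have "\<dots> = pderiv ((pderiv ^^ Suc k) F * L) + smult (of_nat (Suc k) * c1) ((pderiv ^^ Suc k) F)"
    by (simp only: Suc pderiv_add pderiv_smult) simp
  also have "pderiv ((pderiv ^^ Suc k) F * L) = (pderiv ^^ Suc k) F * [:c1:] + L * pderiv ((pderiv ^^ Suc k) F)"
    by (simp only: pderiv_mult L)
  also have "(pderiv ^^ Suc k) F * [:c1:] = smult c1 ((pderiv ^^ Suc k) F)"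
    by (simp add: mult.commute)
  also have "smult (of_nat (Suc (Suc k)) * c1) ((pderiv ^^ Suc k) F) =
     smult (of_nat (Suc k) * c1) ((pderiv ^^ Suc k) F) + smult c1 ((pderiv ^^ Suc k) F)"
    by (simp add: smult_add_left[symmetric] algebra_simps)
  ultimately show ?case by (simp add: algebra_simps)
qed

lemma dd_mult_lin_0: "dd (F * [:c0, c1:]) 0 x = dd F 0 x * (c0 + c1 * x)"
  by (simp add: dd_def algebra_simps)

lemma dd_mult_lin_Suc:
  "dd (F * [:c0, c1:]) (Suc k) x = dd F (Suc k) x * (c0 + c1 * x) + c1 * dd F k x"
proof -
  have e: "(pderiv ^^ Suc k) (F * [:c0, c1:]) =
     (pderiv ^^ Suc k) F * [:c0, c1:] + smult (of_nat (Suc k) * c1) ((pderiv ^^ k) F)"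
    by (rule pderiv_iter_mult_lin_gen[OF pderiv_lin])
  have "dd (F * [:c0, c1:]) (Suc k) x =
     (poly ((pderiv ^^ Suc k) F) x * (c0 + c1 * x) + of_nat (Suc k) * c1 * poly ((pderiv ^^ k) F) x) / fact (Suc k)"
    unfolding dd_def e by (simp add: algebra_simps)
  also have "\<dots> = dd F (Suc k) x * (c0 + c1 * x) + c1 * dd F k x"
  proof -
    have f: "fact k > (0::real)" by simp
    have K: "real (Suc k) > 0" by simp
    have gen: "(A * C + K * c1 * B) / (K * f) = A / (K * f) * C + c1 * (B / f)"
      if "f > 0" "K > 0" for A B C K f :: real
      using that by (simp add: field_simps)
    show ?thesis unfolding dd_def fact_Suc of_nat_mult
      by (rule gen[OF f K])
  qed
  finally show ?thesis .
qed

lemma dd_1: "dd 1 k x = (if k = 0 then 1 else 0)"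
  by (cases k) (simp_all add: dd_def pderiv_iter_0 del: funpow.simps, simp add: funpow_Suc_right pderiv_iter_0 del: funpow.simps)

lemma dd_lin_power: "dd ([:-x, 1:] ^ j) k x = (if k = j then 1 else 0)"
proof (induction j arbitrary: k)
  case 0
  then show ?case by (simp add: dd_1)
next
  case (Suc j)
  have e: "[:-x, 1:] ^ Suc j = [:-x, 1:] ^ j * [:-x, 1:]" by (simp add: mult.commute)
  show ?case
  proof (cases k)
    case 0
    then show ?thesis by (simp only: e dd_mult_lin_0) simp
  next
    case (Suc k')
    then show ?thesis by (simp only: e dd_mult_lin_Suc Suc.IH) simp
  qed
qed

lemma lin_mult_bound:
  assumes F: "\<And>k. \<bar>dd F k x\<bar> \<le> real (m choose k) * \<beta> ^ k * \<alpha> ^ (m - k)"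
    and L0: "\<bar>c0 + c1 * x\<bar> \<le> \<alpha>" and L1: "\<bar>c1\<bar> \<le> \<beta>" and a: "0 \<le> \<alpha>" and b: "0 \<le> \<beta>"
  shows "\<bar>dd (F * [:c0, c1:]) k x\<bar> \<le> real (Suc m choose k) * \<beta> ^ k * \<alpha> ^ (Suc m - k)"
proof (cases k)
  case 0
  have "\<bar>dd F 0 x * (c0 + c1 * x)\<bar> \<le> \<alpha> ^ m * \<alpha>"
    unfolding abs_mult using F[of 0] L0 a
    by (intro mult_mono) auto
  then show ?thesis using 0 by (simp only: dd_mult_lin_0) (simp add: mult.commute)
next
  case (Suc j)
  have t1: "\<bar>dd F (Suc j) x * (c0 + c1 * x)\<bar> \<le> real (m choose Suc j) * \<beta> ^ Suc j * \<alpha> ^ (m - j)"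
  proof (cases "Suc j \<le> m")
    case True
    have "\<bar>dd F (Suc j) x * (c0 + c1 * x)\<bar> \<le> (real (m choose Suc j) * \<beta> ^ Suc j * \<alpha> ^ (m - Suc j)) * \<alpha>"
      unfolding abs_mult using F[of "Suc j"] L0 a b by (intro mult_mono) auto
    moreover have "\<alpha> ^ (m - Suc j) * \<alpha> = \<alpha> ^ (m - j)"
      using True by (metis Suc_diff_Suc Suc_le_lessD power_Suc2)
    ultimately show ?thesis by (simp add: mult.assoc)
  next
    case False
    then have "m choose Suc j = 0" by simp
    then have "dd F (Suc j) x = 0" using F[of "Suc j"] by (simp del: binomial_eq_0_iff)
    then show ?thesis using \<open>m choose Suc j = 0\<close> b a by simp
  qed
  have t2: "\<bar>c1 * dd F j x\<bar> \<le> \<beta> * (real (m choose j) * \<beta> ^ j * \<alpha> ^ (m - j))"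
    unfolding abs_mult using F[of j] L1 b by (intro mult_mono) auto
  have "\<bar>dd (F * [:c0, c1:]) k x\<bar> \<le> \<bar>dd F (Suc j) x * (c0 + c1 * x)\<bar> + \<bar>c1 * dd F j x\<bar>"
    using Suc by (simp only: dd_mult_lin_Suc abs_triangle_ineq)
  also have "\<dots> \<le> real (m choose Suc j) * \<beta> ^ Suc j * \<alpha> ^ (m - j) + \<beta> * (real (m choose j) * \<beta> ^ j * \<alpha> ^ (m - j))"
    using t1 t2 by simp
  also have "\<dots> = real (Suc m choose k) * \<beta> ^ k * \<alpha> ^ (Suc m - k)"
    using Suc by (simp add: algebra_simps)
  finally show ?thesis .
qed

lemma lin_pow_bound:
  assumes F: "\<And>k. \<bar>dd F k x\<bar> \<le> real (m choose k) * \<beta> ^ k * \<alpha> ^ (m - k)"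
    and L0: "\<bar>c0 + c1 * x\<bar> \<le> \<alpha>" and L1: "\<bar>c1\<bar> \<le> \<beta>" and a: "0 \<le> \<alpha>" and b: "0 \<le> \<beta>"
  shows "\<bar>dd (F * [:c0, c1:] ^ j) k x\<bar> \<le> real ((m + j) choose k) * \<beta> ^ k * \<alpha> ^ (m + j - k)"
proof (induction j arbitrary: k)
  case 0
  then show ?case using F by simp
next
  case (Suc j)
  have e: "F * [:c0, c1:] ^ Suc j = (F * [:c0, c1:] ^ j) * [:c0, c1:]"
    by (simp add: algebra_simps)
  show ?case unfolding e using lin_mult_bound[OF Suc.IH L0 L1 a b] by simp
qed

lemma dd_one_bound: "\<bar>dd 1 k x\<bar> \<le> real (0 choose k) * \<beta> ^ k * \<alpha> ^ (0 - k)"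
  by (cases k) (simp_all add: dd_1)


fun cfP :: "real \<Rightarrow> nat \<Rightarrow> int" where
  "cfP x 0 = 1"
| "cfP x (Suc 0) = cf_quot x 0"
| "cfP x (Suc (Suc k)) = cf_quot x (Suc k) * cfP x (Suc k) + cfP x k"

fun cfQ :: "real \<Rightarrow> nat \<Rightarrow> int" where
  "cfQ x 0 = 0"
| "cfQ x (Suc 0) = 1"
| "cfQ x (Suc (Suc k)) = cf_quot x (Suc k) * cfQ x (Suc k) + cfQ x k"

lemma cf_den_cfQ: "cf_den x m = cfQ x (Suc m)"
  by (induction x m rule: cf_den.induct) auto

lemma cf_rem_irrat: "x \<notin> \<rat> \<Longrightarrow> cf_rem x k \<notin> \<rat>"
proof (induction k)
  case 0 then show ?case by simp
next
  case (Suc k)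
  let ?r = "cf_rem x k"
  show ?case
  proof
    assume "cf_rem x (Suc k) \<in> \<rat>"
    then have "1 / (?r - of_int \<lfloor>?r\<rfloor>) \<in> \<rat>" by simp
    then have "inverse (1 / (?r - of_int \<lfloor>?r\<rfloor>)) \<in> \<rat>" by (rule Rats_inverse)
    then have "?r - of_int \<lfloor>?r\<rfloor> \<in> \<rat>" by simp
    then have "?r - of_int \<lfloor>?r\<rfloor> + of_int \<lfloor>?r\<rfloor> \<in> \<rat>" by (intro Rats_add) auto
    then show False using Suc by simp
  qed
qed

lemma frac_pos:
  assumes "r \<notin> \<rat>" shows "0 < r - of_int \<lfloor>r\<rfloor>" "r - of_int \<lfloor>r\<rfloor> < 1"
proof -
  have "r \<noteq> of_int \<lfloor>r\<rfloor>" using assms by (metis Rats_of_int)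
  then show "0 < r - of_int \<lfloor>r\<rfloor>" by (simp add: less_le)
  show "r - of_int \<lfloor>r\<rfloor> < 1" by linarith
qed

lemma cf_rem_gt1: "x \<notin> \<rat> \<Longrightarrow> cf_rem x (Suc k) > 1"
proof -
  assume x: "x \<notin> \<rat>"
  let ?r = "cf_rem x k"
  have "?r \<notin> \<rat>" using cf_rem_irrat[OF x] .
  from frac_pos[OF this] show ?thesis by (simp add: field_simps)
qed

lemma cf_quot_ge1: "x \<notin> \<rat> \<Longrightarrow> cf_quot x (Suc k) \<ge> 1"
  using cf_rem_gt1[of x k] unfolding cf_quot_def by linarith

lemma cfQ_props: "x \<notin> \<rat> \<Longrightarrow> 0 \<le> cfQ x k \<and> cfQ x k \<le> cfQ x (Suc k) \<and> 1 \<le> cfQ x (Suc k)"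
proof (induction k)
  case 0 then show ?case by simp
next
  case (Suc k)
  have a: "cf_quot x (Suc k) \<ge> 1" using cf_quot_ge1[OF Suc.prems] .
  have "cfQ x (Suc (Suc k)) = cf_quot x (Suc k) * cfQ x (Suc k) + cfQ x k" by simp
  moreover have "cf_quot x (Suc k) * cfQ x (Suc k) \<ge> 1 * cfQ x (Suc k)"
    using a Suc by (intro mult_right_mono) auto
  ultimately have h: "cfQ x (Suc (Suc k)) \<ge> cfQ x (Suc k)" using Suc by linarith
  show ?case using Suc h by auto
qed

lemma cf_ident:
  assumes x: "x \<notin> \<rat>"
  shows "x * (of_int (cfQ x (Suc k)) * cf_rem x (Suc k) + of_int (cfQ x k)) =
         of_int (cfP x (Suc k)) * cf_rem x (Suc k) + of_int (cfP x k)"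
proof (induction k)
  case 0
  have fp: "0 < x - of_int \<lfloor>x\<rfloor>" using frac_pos[OF x] by simp
  then show ?case by (simp add: cf_quot_def field_simps)
next
  case (Suc k)
  define r where "r = cf_rem x (Suc k)"
  define r' where "r' = cf_rem x (Suc (Suc k))"
  define a where "a = (of_int (cf_quot x (Suc k)) :: real)"
  have rirr: "r \<notin> \<rat>" unfolding r_def using cf_rem_irrat[OF x] .
  have r'pos: "r' > 1" unfolding r'_def using cf_rem_gt1[OF x] .
  have r_eq: "r = a + 1 / r'"
  proof -
    have "r' = 1 / (r - a)" unfolding r'_def r_def a_def by (simp add: cf_quot_def)
    moreover have "r - a > 0" unfolding a_def cf_quot_def r_def using frac_pos[OF rirr] r_def by simp
    ultimately show ?thesis using r'pos by (simp add: field_simps)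
  qed
  have IH: "x * (of_int (cfQ x (Suc k)) * r + of_int (cfQ x k)) = of_int (cfP x (Suc k)) * r + of_int (cfP x k)"
    using Suc unfolding r_def .
  have Q2: "of_int (cfQ x (Suc (Suc k))) = a * of_int (cfQ x (Suc k)) + of_int (cfQ x k)"
    by (simp add: a_def)
  have P2: "of_int (cfP x (Suc (Suc k))) = a * of_int (cfP x (Suc k)) + of_int (cfP x k)"
    by (simp add: a_def)
  have "x * (of_int (cfQ x (Suc (Suc k))) * r' + of_int (cfQ x (Suc k))) =
        r' * (x * (of_int (cfQ x (Suc k)) * r + of_int (cfQ x k)))"
    unfolding Q2 r_eq using r'pos by (simp add: field_simps)
  also have "\<dots> = r' * (of_int (cfP x (Suc k)) * r + of_int (cfP x k))" by (simp add: IH)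
  also have "\<dots> = of_int (cfP x (Suc (Suc k))) * r' + of_int (cfP x (Suc k))"
    unfolding P2 r_eq using r'pos by (simp add: field_simps)
  finally show ?case unfolding r'_def .
qed

lemma cf_det: "cfQ x (Suc k) * cfP x k - cfP x (Suc k) * cfQ x k = (-1) ^ k"
proof (induction k)
  case 0 then show ?case by simp
next
  case (Suc k)
  then show ?case by (simp add: algebra_simps)
qed

lemma cf_approx:
  fixes x :: real and m :: nat
  assumes x: "x \<notin> \<rat>"
  defines "q \<equiv> cfQ x (Suc m)" and "q' \<equiv> cfQ x m" and "p \<equiv> cfP x (Suc m)" and "p' \<equiv> cfP x m"
  shows "1 \<le> q" "0 \<le> q'" "q' \<le> q" "q * p' - p * q' = (-1) ^ m"
    "\<bar>of_int q * x - of_int p\<bar> \<le> 1 / of_int q" "\<bar>of_int q' * x - of_int p'\<bar> \<le> 1 / of_int q"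
proof -
  show q1: "1 \<le> q" "0 \<le> q'" "q' \<le> q" using cfQ_props[OF x, of m] by (auto simp: q_def q'_def)
  show det: "q * p' - p * q' = (-1) ^ m" using cf_det[of x m] by (simp add: q_def q'_def p_def p'_def)
  define r where "r = cf_rem x (Suc m)"
  have r1: "r > 1" unfolding r_def using cf_rem_gt1[OF x] .
  have id: "x * (of_int q * r + of_int q') = of_int p * r + of_int p'"
    using cf_ident[OF x, of m] by (simp add: q_def q'_def p_def p'_def r_def)
  have d1: "(of_int q * x - of_int p) * (of_int q * r + of_int q') = (-1) ^ m"
  proof -
    have "(of_int q * x - of_int p) * (of_int q * r + of_int q') =
       of_int q * (x * (of_int q * r + of_int q')) - of_int p * (of_int q * r + of_int q')"
      by (simp add: algebra_simps)
    also have "\<dots> = of_int (q * p' - p * q')" unfolding id by (simp add: algebra_simps)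
    finally show ?thesis using det by simp
  qed
  have d2: "of_int q' * x - of_int p' = - r * (of_int q * x - of_int p)"
    using id by (simp add: algebra_simps)
  have qpos: "(of_int q::real) \<ge> 1" using q1 by simp
  have q'pos: "(of_int q'::real) \<ge> 0" using q1 by simp
  have den: "of_int q * r + of_int q' \<ge> (of_int q :: real) * r" using q'pos by simp
  have den2: "(of_int q :: real) * r \<ge> of_int q" using qpos r1 by simp
  have dpos: "of_int q * r + of_int q' > (0::real)" using den den2 qpos by linarith
  have "\<bar>(of_int q * x - of_int p) * (of_int q * r + of_int q')\<bar> = (1::real)"
    using d1 by simp
  then have absd: "\<bar>of_int q * x - of_int p\<bar> * (of_int q * r + of_int q') = 1"
    using dpos by (simp add: abs_mult)
  have e1: "\<bar>of_int q * x - of_int p\<bar> = 1 / (of_int q * r + of_int q')"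
    using absd dpos by (simp add: field_simps)
  show "\<bar>of_int q * x - of_int p\<bar> \<le> 1 / of_int q"
    unfolding e1
  proof (rule divide_left_mono)
    show "of_int q \<le> of_int q * r + (of_int q' :: real)" using den den2 by linarith
    show "0 < (of_int q * r + of_int q') * (of_int q :: real)" using dpos qpos by simp
  qed simp
  have "\<bar>of_int q' * x - of_int p'\<bar> = r / (of_int q * r + of_int q')"
    unfolding d2 abs_mult abs_minus_cancel e1 using r1 by simp
  also have "\<dots> \<le> r / (of_int q * r)"
    using den den2 qpos r1 dpos by (intro divide_left_mono mult_pos_pos) auto
  also have "\<dots> = 1 / of_int q" using r1 by simp
  finally show "\<bar>of_int q' * x - of_int p'\<bar> \<le> 1 / of_int q" .
qed


lemma poly_eq_off:
  fixes A B :: "real poly"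
  assumes "\<And>x. x \<noteq> a \<Longrightarrow> poly A x = poly B x"
  shows "A = B"
proof (rule ccontr)
  assume "A \<noteq> B"
  then have "A - B \<noteq> 0" by simp
  then have "finite {x. poly (A - B) x = 0}" by (rule poly_roots_finite)
  moreover have "UNIV - {a} \<subseteq> {x. poly (A - B) x = 0}" using assms by auto
  ultimately have "finite (UNIV - {a} :: real set)" by (rule finite_subset[rotated])
  then have "finite (UNIV :: real set)" by simp
  then show False by (simp add: infinite_UNIV_char_0)
qed

definition ipoly :: "real poly \<Rightarrow> bool" where
  "ipoly R \<longleftrightarrow> (\<forall>i. coeff R i \<in> \<int>)"

lemma ipoly_add: "ipoly A \<Longrightarrow> ipoly B \<Longrightarrow> ipoly (A + B)"
  by (auto simp: ipoly_def)

lemma ipoly_diff: "ipoly A \<Longrightarrow> ipoly B \<Longrightarrow> ipoly (A - B)"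
  by (auto simp: ipoly_def)

lemma ipoly_smult: "c \<in> \<int> \<Longrightarrow> ipoly A \<Longrightarrow> ipoly (smult c A)"
  by (auto simp: ipoly_def)

lemma ipoly_mult: "ipoly A \<Longrightarrow> ipoly B \<Longrightarrow> ipoly (A * B)"
  by (auto simp: ipoly_def coeff_mult intro!: Ints_sum Ints_mult)

lemma ipoly_1: "ipoly 1"
  by (auto simp: ipoly_def coeff_1)

lemma ipoly_0: "ipoly 0"
  by (auto simp: ipoly_def)

lemma ipoly_power: "ipoly A \<Longrightarrow> ipoly (A ^ k)"
  by (induction k) (auto intro: ipoly_mult ipoly_1)

lemma ipoly_sum: "(\<And>i. i \<in> I \<Longrightarrow> ipoly (f i)) \<Longrightarrow> ipoly (\<Sum>i\<in>I. f i)"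
  by (induction I rule: infinite_finite_induct) (auto intro: ipoly_add ipoly_0)

lemma ipoly_pCons: "a \<in> \<int> \<Longrightarrow> ipoly B \<Longrightarrow> ipoly (pCons a B)"
  by (auto simp: ipoly_def coeff_pCons split: nat.splits)

lemma ipoly_lin: "a \<in> \<int> \<Longrightarrow> b \<in> \<int> \<Longrightarrow> ipoly [:a, b:]"
  by (intro ipoly_pCons ipoly_0) auto

lemma ipoly_monom: "c \<in> \<int> \<Longrightarrow> ipoly (monom c k)"
  by (auto simp: ipoly_def coeff_monom)

lemma power_split_div:
  fixes D a b :: real
  assumes "D \<noteq> 0" "i \<le> n"
  shows "D ^ n * (a / D) ^ i * (b / D) ^ (n - i) = a ^ i * b ^ (n - i)"
proof -
  have "D ^ n = D ^ i * D ^ (n - i)" using assms(2) by (simp add: power_add[symmetric])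
  then show ?thesis using assms(1) by (simp add: power_divide field_simps)
qed

lemma trm_aux:
  fixes a b :: real assumes b: "b \<noteq> 0" and i: "i \<le> n"
  shows "(-1) ^ (n - i) * a ^ i * b ^ (n - i) = (- b) ^ n * (- a / b) ^ i"
proof -
  have n: "n = (n - i) + i" using i by simp
  have "(- b) ^ n * (- a / b) ^ i = (- b) ^ (n - i) * ((- b) ^ i * (- a / b) ^ i)"
    by (subst n) (simp only: power_add mult_ac)
  also have "(- b) ^ i * (- a / b) ^ i = a ^ i"
    using b by (simp add: power_mult_distrib[symmetric])
  also have "(- b) ^ (n - i) = (-1) ^ (n - i) * b ^ (n - i)" by (rule power_minus)
  finally show ?thesis by (simp add: mult_ac)
qed

locale cfsetup =
  fixes v u v' u' eps :: int and n :: nat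
  assumes det: "u * v' - v * u' = eps" and eps: "eps = 1 \<or> eps = -1" and u0: "u \<noteq> 0"
begin

definition L1 :: "real poly" where "L1 = [:- of_int v, of_int u:]"
definition L2 :: "real poly" where "L2 = [:- of_int v', of_int u':]"
definition B :: "nat \<Rightarrow> real poly" where "B i = L1 ^ i * L2 ^ (n - i)"

definition M :: "nat \<Rightarrow> real poly" where
  "M l = [:of_int v, of_int v':] ^ l * [:of_int u, of_int u':] ^ (n - l)"
definition Phi :: "real poly \<Rightarrow> real poly" where
  "Phi R = (\<Sum>l\<le>n. smult (coeff R l) (M l))"
definition tau :: "real poly \<Rightarrow> nat \<Rightarrow> real" where
  "tau R i = of_int eps ^ n * (-1) ^ (n - i) * coeff (Phi R) i"

lemma eps_sq: "(of_int eps :: real) ^ 2 = 1" using eps by auto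

lemma eps_pow2: "(of_int eps :: real) ^ n * of_int eps ^ n = 1"
proof -
  have e: "(of_int eps :: real) * of_int eps = 1" using eps by auto
  show ?thesis by (simp add: power_mult_distrib[symmetric] e)
qed

lemma poly_B: "poly (B i) x = (of_int u * x - of_int v) ^ i * (of_int u' * x - of_int v') ^ (n - i)"
  by (simp add: B_def L1_def L2_def algebra_simps)

lemma degree_L: "degree L1 \<le> 1" "degree L2 \<le> 1"
  by (auto simp: L1_def L2_def degree_pCons_le)

lemma degree_B: "i \<le> n \<Longrightarrow> degree (B i) \<le> n"
proof -
  assume i: "i \<le> n"
  have "degree (B i) \<le> degree (L1 ^ i) + degree (L2 ^ (n - i))"
    unfolding B_def by (rule degree_mult_le)
  also have "\<dots> \<le> i * degree L1 + (n - i) * degree L2"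
    using degree_power_le[of L1 i] degree_power_le[of L2 "n - i"] by (simp add: mult.commute)
  also have "\<dots> \<le> i * 1 + (n - i) * 1"
    using degree_L by (intro add_mono mult_le_mono2) auto
  finally show ?thesis using i by simp
qed

lemma ipoly_B: "ipoly (B i)"
  unfolding B_def L1_def L2_def by (intro ipoly_mult ipoly_power ipoly_lin) auto

lemma ipoly_M: "ipoly (M l)"
  unfolding M_def by (intro ipoly_mult ipoly_power ipoly_lin) auto

lemma poly_Phi:
  assumes R: "degree R \<le> n" and D: "of_int u + of_int u' * w \<noteq> (0::real)"
  shows "poly (Phi R) w = (of_int u + of_int u' * w) ^ n * poly R ((of_int v + of_int v' * w) / (of_int u + of_int u' * w))"
proof -
  define D where "D = (of_int u + of_int u' * w :: real)"
  define X where "X = (of_int v + of_int v' * w) / D"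
  have DX: "of_int v + of_int v' * w = X * D" using D by (simp add: X_def D_def)
  have pM: "poly (M l) w = (X * D) ^ l * D ^ (n - l)" for l
  proof -
    have "poly (M l) w = (of_int v + of_int v' * w) ^ l * D ^ (n - l)"
      by (simp add: M_def D_def algebra_simps)
    then show ?thesis by (simp only: DX)
  qed
  have "poly (Phi R) w = (\<Sum>l\<le>n. coeff R l * ((X * D) ^ l * D ^ (n - l)))"
    by (simp add: Phi_def poly_sum pM)
  also have "\<dots> = (\<Sum>l\<le>n. D ^ n * (coeff R l * X ^ l))"
  proof (rule sum.cong[OF refl])
    fix l assume "l \<in> {..n}"
    then have "D ^ n = D ^ l * D ^ (n - l)" by (simp add: power_add[symmetric])
    then show "coeff R l * ((X * D) ^ l * D ^ (n - l)) = D ^ n * (coeff R l * X ^ l)"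
      by (simp add: power_mult_distrib algebra_simps)
  qed
  also have "\<dots> = D ^ n * poly R X"
  proof -
    have "poly R X = (\<Sum>l\<le>n. coeff R l * X ^ l)"
      unfolding poly_altdef
      by (rule sum.mono_neutral_left) (use R le_degree in auto)
    then show ?thesis by (simp add: sum_distrib_left)
  qed
  finally show ?thesis by (simp add: D_def X_def)
qed

lemma u'0_v': "u' = 0 \<Longrightarrow> v' \<noteq> 0"
  using det eps by auto

lemma Phi_B:
  assumes i: "i \<le> n"
  shows "Phi (B i) = monom (of_int eps ^ n * (-1) ^ (n - i)) i"
proof (rule poly_eq_off[where a = "- of_int u / of_int u'"])
  fix w :: real
  assume w: "w \<noteq> - of_int u / of_int u'"
  define D where "D = (of_int u + of_int u' * w :: real)"
  have D0: "D \<noteq> 0"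
  proof (cases "u' = 0")
    case True then show ?thesis using u0 by (simp add: D_def)
  next
    case False then show ?thesis using w by (auto simp: D_def field_simps)
  qed
  define X where "X = (of_int v + of_int v' * w) / D"
  have e1: "of_int u * X - of_int v = of_int eps * w / D"
  proof -
    have "of_int u * X - of_int v = (of_int u * (of_int v + of_int v' * w) - of_int v * D) / D"
      using D0 by (simp add: X_def field_simps)
    also have "of_int u * (of_int v + of_int v' * w) - of_int v * D = of_int (u * v' - v * u') * w"
      by (simp add: D_def algebra_simps)
    finally show ?thesis using det by simp
  qed
  have e2: "of_int u' * X - of_int v' = - of_int eps / D"
  proof -
    have "of_int u' * X - of_int v' = (of_int u' * (of_int v + of_int v' * w) - of_int v' * D) / D"
      using D0 by (simp add: X_def field_simps)
    also have "of_int u' * (of_int v + of_int v' * w) - of_int v' * D = - of_int (u * v' - v * u')"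
      by (simp add: D_def algebra_simps)
    finally show ?thesis using det by simp
  qed
  have "poly (Phi (B i)) w = D ^ n * poly (B i) X"
    using poly_Phi[OF degree_B[OF i], of w] D0 by (simp add: D_def X_def)
  also have "\<dots> = D ^ n * (of_int eps * w / D) ^ i * (- of_int eps / D) ^ (n - i)"
    by (simp add: poly_B e1 e2)
  also have "\<dots> = (of_int eps * w) ^ i * (- of_int eps) ^ (n - i)"
    by (rule power_split_div[OF D0 i])
  also have "\<dots> = of_int eps ^ n * (-1) ^ (n - i) * w ^ i"
  proof -
    have m: "(- (of_int eps :: real)) ^ (n - i) = (-1) ^ (n - i) * of_int eps ^ (n - i)"
      by (rule power_minus)
    have a: "(of_int eps :: real) ^ i * of_int eps ^ (n - i) = of_int eps ^ n"
      using i by (simp add: power_add[symmetric])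
    show ?thesis unfolding m power_mult_distrib using a by (simp only: mult_ac)
  qed
  also have "\<dots> = poly (monom (of_int eps ^ n * (-1) ^ (n - i)) i) w"
    by (simp add: poly_monom)
  finally show "poly (Phi (B i)) w = poly (monom (of_int eps ^ n * (-1) ^ (n - i)) i) w" .
qed

lemma degree_M: "l \<le> n \<Longrightarrow> degree (M l) \<le> n"
proof -
  assume l: "l \<le> n"
  have "degree (M l) \<le> degree ([:of_int v, of_int v':] ^ l :: real poly) + degree ([:of_int u, of_int u':] ^ (n - l) :: real poly)"
    unfolding M_def by (rule degree_mult_le)
  also have "\<dots> \<le> degree [:of_int v, (of_int v' :: real):] * l + degree [:of_int u, (of_int u' :: real):] * (n - l)"
    by (intro add_mono degree_power_le)
  also have "\<dots> \<le> 1 * l + 1 * (n - l)"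
    by (intro add_mono mult_le_mono1) (auto simp: degree_pCons_le)
  finally show ?thesis using l by simp
qed

lemma degree_Phi: "degree (Phi R) \<le> n"
  unfolding Phi_def
proof (rule degree_sum_le)
  fix l assume "l \<in> {..n}"
  then show "degree (smult (coeff R l) (M l)) \<le> n"
    using degree_M[of l] degree_smult_le[of "coeff R l" "M l"] by simp
qed simp

lemma poly_Phi_coeffs: "poly (Phi R) w = (\<Sum>i\<le>n. coeff (Phi R) i * w ^ i)"
  unfolding poly_altdef
  by (rule sum.mono_neutral_left) (use degree_Phi le_degree in \<open>auto intro: order.trans\<close>)

lemma Psi_Phi:
  assumes R: "degree R \<le> n"
  shows "R = (\<Sum>i\<le>n. smult (tau R i) (B i))"
proof (rule poly_eq_off[where a = "of_int v' / of_int u'"])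
  fix x :: real
  assume xa: "x \<noteq> of_int v' / of_int u'"
  define L1x where "L1x = of_int u * x - (of_int v :: real)"
  define L2x where "L2x = of_int u' * x - (of_int v' :: real)"
  have L2x: "L2x \<noteq> 0"
  proof (cases "u' = 0")
    case True then show ?thesis using u'0_v' by (simp add: L2x_def)
  next
    case False then show ?thesis using xa by (auto simp: L2x_def field_simps)
  qed
  define w where "w = - L1x / L2x"
  define D where "D = of_int u + of_int u' * w"
  have DL: "D * L2x = - of_int eps"
  proof -
    have "D * L2x = of_int u * L2x - of_int u' * L1x" using L2x by (simp add: D_def w_def field_simps)
    also have "\<dots> = - of_int (u * v' - v * u')" by (simp add: L1x_def L2x_def algebra_simps)
    finally show ?thesis using det by simp
  qed
  have D0: "D \<noteq> 0" using DL eps by auto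
  have VL: "(of_int v + of_int v' * w) * L2x = - of_int eps * x"
  proof -
    have "(of_int v + of_int v' * w) * L2x = of_int v * L2x - of_int v' * L1x" using L2x by (simp add: w_def field_simps)
    also have "\<dots> = - of_int (u * v' - v * u') * x" by (simp add: L1x_def L2x_def algebra_simps)
    finally show ?thesis using det by simp
  qed
  have X: "(of_int v + of_int v' * w) / D = x"
  proof -
    have "(of_int v + of_int v' * w) * L2x = x * (D * L2x)" using VL DL by simp
    then have "of_int v + of_int v' * w = x * D" using L2x by simp
    then show ?thesis using D0 by simp
  qed
  have PR: "poly (Phi R) w = D ^ n * poly R x"
    using poly_Phi[OF R, of w] D0 X by (simp add: D_def)
  have trm: "(-1) ^ (n - i) * L1x ^ i * L2x ^ (n - i) = (- L2x) ^ n * w ^ i" if i: "i \<le> n" for i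
    unfolding w_def by (rule trm_aux[OF L2x i])
  have "poly (\<Sum>i\<le>n. smult (tau R i) (B i)) x = (\<Sum>i\<le>n. of_int eps ^ n * coeff (Phi R) i * ((-1) ^ (n - i) * L1x ^ i * L2x ^ (n - i)))"
    by (simp add: poly_sum tau_def poly_B L1x_def L2x_def mult_ac)
  also have "\<dots> = (\<Sum>i\<le>n. of_int eps ^ n * (- L2x) ^ n * (coeff (Phi R) i * w ^ i))"
  proof (rule sum.cong[OF refl])
    fix i assume "i \<in> {..n}"
    then have i: "i \<le> n" by simp
    show "of_int eps ^ n * coeff (Phi R) i * ((-1) ^ (n - i) * L1x ^ i * L2x ^ (n - i)) =
          of_int eps ^ n * (- L2x) ^ n * (coeff (Phi R) i * w ^ i)"
      unfolding trm[OF i] by (simp only: mult_ac)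
  qed
  also have "\<dots> = of_int eps ^ n * (- L2x) ^ n * poly (Phi R) w"
    by (simp add: poly_Phi_coeffs sum_distrib_left)
  also have "\<dots> = of_int eps ^ n * (- L2x * D) ^ n * poly R x"
    unfolding PR power_mult_distrib by (simp only: mult_ac)
  also have "- L2x * D = of_int eps" using DL by (simp add: mult.commute)
  also have "of_int eps ^ n * of_int eps ^ n * poly R x = poly R x" using eps_pow2 by simp
  finally show "poly R x = poly (\<Sum>i\<le>n. smult (tau R i) (B i)) x" by simp
qed

lemma Phi_add: "Phi (A + C) = Phi A + Phi C"
  by (simp add: Phi_def smult_add_left sum.distrib)

lemma smult_sum_right: "smult c (\<Sum>i\<in>I. f i) = (\<Sum>i\<in>I. smult c (f i))"
  by (induction I rule: infinite_finite_induct) (auto simp: smult_add_right)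

lemma Phi_smult: "Phi (smult c A) = smult c (Phi A)"
  by (simp add: Phi_def smult_sum_right)

lemma Phi_0: "Phi 0 = 0"
  by (simp add: Phi_def)

lemma Phi_sum: "Phi (\<Sum>i\<in>I. f i) = (\<Sum>i\<in>I. Phi (f i))"
  by (induction I rule: infinite_finite_induct) (auto simp: Phi_add Phi_0)

lemma coeff_Phi_Bsum:
  assumes i: "i \<le> n"
  shows "coeff (Phi (\<Sum>j\<le>n. smult (c j) (B j))) i = of_int eps ^ n * (-1) ^ (n - i) * c i"
proof -
  have "coeff (Phi (\<Sum>j\<le>n. smult (c j) (B j))) i = (\<Sum>j\<le>n. c j * coeff (monom (of_int eps ^ n * (-1) ^ (n - j)) j) i)"
    by (simp add: Phi_sum Phi_smult Phi_B coeff_sum)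
  also have "\<dots> = (\<Sum>j\<le>n. if j = i then c j * (of_int eps ^ n * (-1) ^ (n - j)) else 0)"
    by (rule sum.cong) (auto simp: coeff_monom)
  also have "\<dots> = c i * (of_int eps ^ n * (-1) ^ (n - i))"
    using i by (simp add: sum.delta')
  finally show ?thesis by (simp add: mult_ac)
qed

lemma ipoly_Phi: "ipoly R \<Longrightarrow> ipoly (Phi R)"
  unfolding Phi_def ipoly_def[of R] by (intro ipoly_sum ipoly_smult ipoly_M) auto

lemma Phi_dvd:
  assumes "\<And>l. \<exists>z::int. coeff R l = of_int c * of_int z"
  shows "\<exists>z::int. coeff (Phi R) i = of_int c * of_int z"
proof -
  obtain z where z: "\<And>l. coeff R l = of_int c * of_int (z l)" using assms by metis
  have "coeff (Phi R) i = of_int c * (\<Sum>l\<le>n. of_int (z l) * coeff (M l) i)"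
    by (simp add: Phi_def coeff_sum z sum_distrib_left mult_ac)
  moreover have "(\<Sum>l\<le>n. of_int (z l) * coeff (M l) i) \<in> \<int>"
    using ipoly_M by (auto simp: ipoly_def intro!: Ints_sum Ints_mult)
  ultimately show ?thesis by (auto elim!: Ints_cases)
qed

end


lemma irreducible_intP:
  fixes P :: "int poly"
  assumes deg: "degree P \<ge> 1"
    and prim: "\<And>c. (\<And>i. c dvd coeff P i) \<Longrightarrow> is_unit c"
    and nofact: "\<And>A B. P = A * B \<Longrightarrow> degree A = 0 \<or> degree B = 0"
  shows "irreducible P"
proof (rule irreducibleI)
  show "P \<noteq> 0" using deg by auto
  show "\<not> is_unit P"
  proof
    assume "is_unit P"
    then obtain c where "P = [:c:]" by (auto simp: is_unit_poly_iff)
    then show False using deg by simp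
  qed
  have const: "is_unit A" if PAB: "P = A * B" and dA: "degree A = 0" for A B
  proof -
    have A: "A = [:coeff A 0:]" using dA by (rule degree_0_id[symmetric])
    have "coeff A 0 dvd coeff P i" for i
    proof -
      have "P = [:coeff A 0:] * B" using PAB A by simp
      then have "coeff P i = coeff A 0 * coeff B i" by simp
      then show ?thesis by simp
    qed
    then have "is_unit (coeff A 0)" by (rule prim)
    then show ?thesis using A by (metis is_unit_const_poly_iff)
  qed
  fix A B assume PAB: "P = A * B"
  from nofact[OF PAB] show "is_unit A \<or> is_unit B"
  proof
    assume "degree A = 0" then show ?thesis using const[OF PAB] by simp
  next
    assume "degree B = 0" then show ?thesis using const[of B A] PAB by (simp add: mult.commute)
  qed
qed

lemma eis_aux:
  fixes P A B :: "int poly"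
  assumes PAB: "P = A * B" and A0: "even (coeff A 0)" and B0: "odd (coeff B 0)"
    and lA: "odd (lead_coeff A)"
  shows "\<exists>i. 1 \<le> i \<and> i \<le> degree A \<and> odd (coeff P i)"
proof -
  define i where "i = (LEAST j. odd (coeff A j))"
  have ex: "odd (coeff A i)" unfolding i_def using lA by (rule LeastI)
  have ile: "i \<le> degree A" unfolding i_def using lA by (rule Least_le)
  have below: "even (coeff A j)" if "j < i" for j
    using not_less_Least[OF that[unfolded i_def]] by simp
  have i0: "i \<noteq> 0"
  proof
    assume "i = 0" then show False using ex A0 by simp
  qed
  then obtain i' where i': "i = Suc i'" by (cases i) auto
  have "coeff P i = (\<Sum>j\<le>i'. coeff A j * coeff B (i - j)) + coeff A i * coeff B 0"
    unfolding PAB coeff_mult i' by (simp add: sum.atMost_Suc)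
  moreover have "even (\<Sum>j\<le>i'. coeff A j * coeff B (i - j))"
    by (rule dvd_sum) (use below i' in auto)
  moreover have "odd (coeff A i * coeff B 0)" using ex B0 by simp
  ultimately have "odd (coeff P i)" by simp
  then show ?thesis using i0 ile by (intro exI[of _ i]) auto
qed

lemma eisenstein_nofact:
  fixes P :: "int poly"
  assumes N: "degree P = N" "N \<ge> 1"
    and lead: "odd (coeff P N)"
    and mid: "\<And>i. 1 \<le> i \<Longrightarrow> i < N \<Longrightarrow> even (coeff P i)"
    and c0: "coeff P 0 mod 4 = 2"
    and PAB: "P = A * B"
  shows "degree A = 0 \<or> degree B = 0"
proof (rule ccontr)
  assume "\<not> (degree A = 0 \<or> degree B = 0)"
  then have dA: "degree A \<ge> 1" and dB: "degree B \<ge> 1" by auto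
  have "A \<noteq> 0" "B \<noteq> 0" using dA dB by auto
  then have dP: "degree P = degree A + degree B" using PAB by (simp add: degree_mult_eq)
  have "coeff P N = lead_coeff P" using N(1) by simp
  also have "\<dots> = lead_coeff A * lead_coeff B" unfolding PAB by (rule lead_coeff_mult)
  finally have "coeff P N = lead_coeff A * lead_coeff B" .
  then have lA: "odd (lead_coeff A)" and lB: "odd (lead_coeff B)" using lead by auto
  have p0: "coeff P 0 = coeff A 0 * coeff B 0" using PAB by (simp add: coeff_mult_0)
  have ev: "even (coeff P 0)" using c0 by presburger
  have not_both: "\<not> (even (coeff A 0) \<and> even (coeff B 0))"
  proof
    assume "even (coeff A 0) \<and> even (coeff B 0)"
    then obtain a b where "coeff A 0 = 2 * a" "coeff B 0 = 2 * b" by (auto elim!: evenE)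
    then have "coeff P 0 = 4 * (a * b)" using p0 by simp
    then show False using c0 by simp
  qed
  have one: "even (coeff A 0) \<or> even (coeff B 0)" using ev p0 by auto
  show False
  proof (cases "even (coeff A 0)")
    case True
    then have "odd (coeff B 0)" using not_both by auto
    from eis_aux[OF PAB True this lA] obtain i where "1 \<le> i" "i \<le> degree A" "odd (coeff P i)" by blast
    moreover have "i < N" using \<open>i \<le> degree A\<close> dP dB N by simp
    ultimately show False using mid by blast
  next
    case False
    then have B0: "even (coeff B 0)" using one by auto
    have "odd (coeff A 0)" using False by simp
    from eis_aux[OF _ B0 this lB, of P] PAB obtain i where "1 \<le> i" "i \<le> degree B" "odd (coeff P i)"
      by (auto simp: mult.commute)
    moreover have "i < N" using \<open>i \<le> degree B\<close> dP dA N by simp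
    ultimately show False using mid by blast
  qed
qed

lemma deg1_nofact:
  fixes P :: "int poly"
  assumes "degree P = 1" and PAB: "P = A * B"
  shows "degree A = 0 \<or> degree B = 0"
proof -
  have "A \<noteq> 0" "B \<noteq> 0" using assms by auto
  then have "degree P = degree A + degree B" using PAB by (simp add: degree_mult_eq)
  then show ?thesis using assms(1) by arith
qed

lemma my_prod_coprime_dvd:
  fixes f :: "'a \<Rightarrow> int"
  assumes "finite I" "\<And>i. i \<in> I \<Longrightarrow> f i dvd x"
    and "\<And>i j. i \<in> I \<Longrightarrow> j \<in> I \<Longrightarrow> i \<noteq> j \<Longrightarrow> coprime (f i) (f j)"
  shows "prod f I dvd x"
  using assms
proof (induction I rule: finite_induct)
  case empty then show ?case by simp
next
  case (insert a I)
  have "coprime (f a) (prod f I)"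
    by (rule prod_coprime_right) (use insert in auto)
  moreover have "prod f I dvd x" using insert by auto
  moreover have "f a dvd x" using insert by auto
  ultimately show ?case using insert by (simp add: divides_mult)
qed

lemma count_bound:
  fixes f :: "'a \<Rightarrow> int"
  assumes "finite I" "\<And>i. i \<in> I \<Longrightarrow> f i dvd x" "\<And>i. i \<in> I \<Longrightarrow> f i \<ge> 3"
    and "\<And>i j. i \<in> I \<Longrightarrow> j \<in> I \<Longrightarrow> i \<noteq> j \<Longrightarrow> coprime (f i) (f j)" and "x > 0"
  shows "3 ^ card I \<le> x"
proof -
  have "prod f I dvd x" by (rule my_prod_coprime_dvd) (use assms in auto)
  then have "prod f I \<le> x" using assms(5) by (rule zdvd_imp_le)
  moreover have "3 ^ card I \<le> prod f I"
  proof -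
    have "(\<Prod>i\<in>I. (3::int)) \<le> prod f I"
      by (rule prod_mono) (use assms(3) in auto)
    then show ?thesis by simp
  qed
  ultimately show ?thesis by simp
qed

lemma numeric_bound: "n \<ge> 2 \<Longrightarrow> (n + 1) * (4 * n - 3) * 2 ^ n < (3::nat) ^ (2 ^ n)"
proof -
  assume n: "n \<ge> 2"
  show ?thesis
  proof (cases "n = 2")
    case True then show ?thesis by simp
  next
    case False
    then have n3: "n \<ge> 3" using n by simp
    have p2: "2 ^ n \<ge> 2 * n + 2" if "n \<ge> 3" for n :: nat
      using that
    proof (induction n rule: dec_induct)
      case base then show ?case by simp
    next
      case (step m) then show ?case by simp
    qed
    have a: "n + 1 \<le> 2 ^ n" using less_exp[of n] by (simp add: Suc_le_eq)
    have b: "4 * n - 3 \<le> 4 * 2 ^ n" using less_exp[of n] by linarith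
    have "(n + 1) * (4 * n - 3) * 2 ^ n \<le> 2 ^ n * (4 * 2 ^ n) * 2 ^ n"
      by (intro mult_mono a b) auto
    also have "\<dots> = 4 * 8 ^ n" by (simp add: power_mult_distrib[symmetric])
    also have "\<dots> < 9 * 9 ^ n"
    proof -
      have "(8::nat) ^ n \<le> 9 ^ n" by (rule power_mono) auto
      moreover have "(9::nat) ^ n \<ge> 1" by simp
      ultimately show ?thesis by linarith
    qed
    also have "9 * 9 ^ n = (3::nat) ^ (2 * n + 2)"
      by (simp add: power_add power_mult)
    also have "\<dots> \<le> 3 ^ (2 ^ n)"
      by (rule power_increasing) (use p2[OF n3] in auto)
    finally show ?thesis .
  qed
qed

lemma binom_le: "n \<ge> 1 \<Longrightarrow> n choose k \<le> 2 ^ (n - 1)"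
proof -
  assume "n \<ge> 1"
  then obtain m where n: "n = Suc m" by (cases n) auto
  show ?thesis
  proof (cases k)
    case 0 then show ?thesis by simp
  next
    case (Suc j)
    have "(Suc m) choose (Suc j) = (m choose j) + (m choose (Suc j))" by simp
    also have "\<dots> \<le> (\<Sum>i\<le>m. m choose i)"
    proof (cases "Suc j \<le> m")
      case True
      have "(\<Sum>i\<in>{j, Suc j}. m choose i) \<le> (\<Sum>i\<le>m. m choose i)"
        by (rule sum_mono2) (use True in auto)
      then show ?thesis by simp
    next
      case False
      then have "m choose (Suc j) = 0" by simp
      moreover have "m choose j \<le> (\<Sum>i\<le>m. m choose i)"
      proof (cases "j \<le> m")
        case True then show ?thesis by (intro member_le_sum) auto
      next
        case False then have "m choose j = 0" by (simp add: binomial_eq_0)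
        then show ?thesis by (simp del: binomial_eq_0_iff)
      qed
      ultimately show ?thesis by (simp del: binomial_eq_0_iff)
    qed
    also have "\<dots> = 2 ^ m" by (rule choose_row_sum)
    finally show ?thesis using n Suc by simp
  qed
qed


locale cfapprox = cfsetup +
  fixes \<xi> :: real
  assumes u1: "u \<ge> 1" and u'nn: "0 \<le> u'" and u'le: "u' \<le> u"
    and d1: "\<bar>of_int u * \<xi> - of_int v\<bar> \<le> 1 / of_int u"
    and d2: "\<bar>of_int u' * \<xi> - of_int v'\<bar> \<le> 1 / of_int u"
    and n1: "n \<ge> 1"
begin

definition W :: "nat \<Rightarrow> real" where "W k = real_of_int u powi (2 * int k - int n)"
definition c5 :: real where "c5 = real (n+1) * 2 ^ (n+1)"

lemma qpos: "real_of_int u \<ge> 1" using u1 by simp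

lemma W_eq: "k \<le> n \<Longrightarrow> W k = real_of_int u ^ k * (1 / real_of_int u) ^ (n - k)"
proof -
  assume k: "k \<le> n"
  have "2 * int k - int n = int k - int (n - k)" using k by simp
  then have "W k = real_of_int u powi (int k - int (n - k))" by (simp add: W_def)
  also have "\<dots> = real_of_int u ^ k / real_of_int u ^ (n - k)"
    using qpos by (subst power_int_diff) auto
  finally show ?thesis by (simp add: power_one_over)
qed

lemma W_pos: "k \<le> n \<Longrightarrow> W k > 0"
  using qpos by (simp add: W_eq)

lemma B_bound:
  assumes i: "i \<le> n"
  shows "\<bar>dd (B i) k \<xi>\<bar> \<le> real (n choose k) * real_of_int u ^ k * (1 / real_of_int u) ^ (n - k)"
proof -
  let ?a = "1 / real_of_int u" and ?b = "real_of_int u"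
  have a: "0 \<le> ?a" and b: "0 \<le> ?b" using qpos by auto
  have h1: "\<bar>- real_of_int v + real_of_int u * \<xi>\<bar> \<le> ?a" using d1 by simp
  have h1': "\<bar>real_of_int u\<bar> \<le> ?b" using u1 by simp
  have h2: "\<bar>- real_of_int v' + real_of_int u' * \<xi>\<bar> \<le> ?a" using d2 by simp
  have h2': "\<bar>real_of_int u'\<bar> \<le> ?b" using u'nn u'le by simp
  have s1: "\<bar>dd (1 * L1 ^ i) k' \<xi>\<bar> \<le> real ((0 + i) choose k') * ?b ^ k' * ?a ^ (0 + i - k')" for k'
    unfolding L1_def by (rule lin_pow_bound[OF dd_one_bound h1 h1' a b])
  have s1': "\<bar>dd (L1 ^ i) k' \<xi>\<bar> \<le> real (i choose k') * ?b ^ k' * ?a ^ (i - k')" for k'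
    using s1[of k'] by simp
  have "\<bar>dd (L1 ^ i * L2 ^ (n - i)) k \<xi>\<bar> \<le> real ((i + (n - i)) choose k) * ?b ^ k * ?a ^ (i + (n - i) - k)"
    unfolding L2_def by (rule lin_pow_bound[OF s1' h2 h2' a b])
  then show ?thesis using i by (simp add: B_def)
qed

lemma err_bound:
  assumes d: "\<And>i. i \<le> n \<Longrightarrow> \<bar>d i\<bar> \<le> 4" and k: "k \<le> n"
  shows "\<bar>dd (\<Sum>i\<le>n. smult (d i) (B i)) k \<xi>\<bar> \<le> c5 * W k"
proof -
  have "\<bar>dd (\<Sum>i\<le>n. smult (d i) (B i)) k \<xi>\<bar> = \<bar>\<Sum>i\<le>n. d i * dd (B i) k \<xi>\<bar>"
    by (simp add: dd_sum dd_smult)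
  also have "\<dots> \<le> (\<Sum>i\<le>n. \<bar>d i * dd (B i) k \<xi>\<bar>)" by (rule sum_abs)
  also have "\<dots> \<le> (\<Sum>i\<le>n. 4 * (real (n choose k) * W k))"
  proof (rule sum_mono)
    fix i assume "i \<in> {..n}"
    then have i: "i \<le> n" by simp
    show "\<bar>d i * dd (B i) k \<xi>\<bar> \<le> 4 * (real (n choose k) * W k)"
      unfolding abs_mult W_eq[OF k] using d[OF i] B_bound[OF i, of k]
      by (intro mult_mono) (auto simp: mult.assoc)
  qed
  also have "\<dots> = real (n + 1) * 4 * real (n choose k) * W k" by simp
  also have "\<dots> \<le> real (n + 1) * 4 * 2 ^ (n - 1) * W k"
  proof -
    have "real (n choose k) \<le> 2 ^ (n - 1)"
      using binom_le[OF n1, of k] by (metis of_nat_le_iff of_nat_numeral of_nat_power)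
    then show ?thesis using W_pos[OF k] by (intro mult_right_mono mult_left_mono) auto
  qed
  also have "\<dots> = c5 * W k"
  proof -
    have "(4::real) * 2 ^ (n - 1) = 2 ^ (n + 1)"
      using n1 by (cases n) (auto simp: power_Suc)
    then show ?thesis unfolding c5_def by (metis mult.assoc)
  qed
  finally show ?thesis .
qed

definition Rt :: "(nat \<Rightarrow> real) \<Rightarrow> real poly" where
  "Rt s = (\<Sum>k\<le>n. smult (2 * c5 * s k * W k) ([:-\<xi>, 1:] ^ k))"

lemma dd_Rt: "k \<le> n \<Longrightarrow> dd (Rt s) k \<xi> = 2 * c5 * s k * W k"
proof -
  assume k: "k \<le> n"
  have "dd (Rt s) k \<xi> = (\<Sum>j\<le>n. 2 * c5 * s j * W j * (if k = j then 1 else 0))"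
    by (simp add: Rt_def dd_sum dd_smult dd_lin_power)
  also have "\<dots> = (\<Sum>j\<le>n. if j = k then 2 * c5 * s j * W j else 0)"
    by (rule sum.cong) auto
  also have "\<dots> = 2 * c5 * s k * W k" using k by (simp add: sum.delta')
  finally show ?thesis .
qed

lemma degree_Rt: "degree (Rt s) \<le> n"
  unfolding Rt_def
proof (rule degree_sum_le)
  fix k assume "k \<in> {..n}"
  then show "degree (smult (2 * c5 * s k * W k) ([:-\<xi>, 1:] ^ k)) \<le> n"
    using degree_smult_le[of "2 * c5 * s k * W k" "[:-\<xi>, 1:] ^ k"] by (simp add: degree_linear_power)
qed simp

definition Pol :: "(nat \<Rightarrow> real) \<Rightarrow> real poly" where
  "Pol E = (\<Sum>i\<le>n. smult (E i) (B i))"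

lemma Pol_diff: "Pol E - Pol E' = Pol (\<lambda>i. E i - E' i)"
  by (simp add: Pol_def sum_subtractf smult_diff_left)

lemma Pol_add: "Pol E + Pol E' = Pol (\<lambda>i. E i + E' i)"
  by (simp add: Pol_def sum.distrib smult_add_left)

lemma Pol_smult: "smult c (Pol E) = Pol (\<lambda>i. c * E i)"
  by (simp add: Pol_def smult_sum_right)

lemma Pol_tau: "degree R \<le> n \<Longrightarrow> Pol (tau R) = R"
  unfolding Pol_def by (rule Psi_Phi[symmetric])

lemma ipoly_Pol: "(\<And>i. i \<le> n \<Longrightarrow> E i \<in> \<int>) \<Longrightarrow> ipoly (Pol E)"
  unfolding Pol_def by (intro ipoly_sum ipoly_smult ipoly_B) auto

lemma degree_Pol: "degree (Pol E) \<le> n"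
  unfolding Pol_def
proof (rule degree_sum_le)
  fix i assume "i \<in> {..n}"
  then show "degree (smult (E i) (B i)) \<le> n"
    using degree_smult_le[of "E i" "B i"] degree_B[of i] by simp
qed simp

lemma tau_int: "ipoly F \<Longrightarrow> tau F i \<in> \<int>"
proof -
  assume "ipoly F"
  then have "coeff (Phi F) i \<in> \<int>" using ipoly_Phi by (auto simp: ipoly_def)
  moreover have "(of_int eps :: real) ^ n * (-1) ^ (n - i) \<in> \<int>" by simp
  ultimately show ?thesis unfolding tau_def by (metis Ints_mult mult.assoc)
qed

lemma approx_main:
  assumes d: "\<And>i. i \<le> n \<Longrightarrow> \<bar>d i\<bar> \<le> 4" and s: "\<bar>s k\<bar> = 1" and k: "k \<le> n"
    and P: "dd P k \<xi> = dd (Rt s) k \<xi> + dd (Pol d) k \<xi>"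
  shows "c5 * W k \<le> \<bar>dd P k \<xi>\<bar> \<and> \<bar>dd P k \<xi>\<bar> \<le> 3 * c5 * W k"
proof -
  have e: "\<bar>dd (Pol d) k \<xi>\<bar> \<le> c5 * W k" unfolding Pol_def by (rule err_bound[OF d k])
  have r: "\<bar>dd (Rt s) k \<xi>\<bar> = 2 * c5 * W k"
    using dd_Rt[OF k, of s] s W_pos[OF k] by (simp add: abs_mult c5_def)
  show ?thesis using e r P by (auto simp: abs_le_iff) 
qed

end


lemma S_bounds:
  fixes r :: real assumes r: "0 \<le> r" "r \<le> 1" and n: "n \<ge> 2"
  shows "1 \<le> (\<Sum>k\<le>n. (if k = 2 then -1 else 1) * r ^ k) \<and>
         (\<Sum>k\<le>n. (if k = 2 then -1 else 1) * r ^ k) \<le> real n - 3/4"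
  using n
proof (induction n rule: dec_induct)
  case base
  have "r - r ^ 2 \<le> 1/4"
  proof -
    have "0 \<le> (r - 1/2) ^ 2" by simp
    then show ?thesis by (simp add: power2_eq_square algebra_simps)
  qed
  moreover have "r ^ 2 \<le> r" using r by (simp add: power2_eq_square mult_left_le)
  ultimately show ?case by (simp add: numeral_2_eq_2)
next
  case (step m)
  have "r ^ Suc m \<le> 1" by (rule power_le_one[OF r])
  moreover have "0 \<le> r ^ Suc m" using r by simp
  ultimately
  show ?case using step by simp
qed

lemma S_one:
  fixes r :: real
  shows "(\<Sum>k\<le>1. (if k = 2 then -1 else 1) * r ^ k) = 1 + r"
  by simp

context cfapprox
begin

definition t :: "nat \<Rightarrow> real" where "t k = (if k = 2 then -1 else 1)"
definition a :: real where "a = of_int u * (of_int u * \<xi> - of_int v)"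
definition sg :: real where "sg = (if a \<le> 0 then 1 else -1)"
definition sP :: "nat \<Rightarrow> real" where "sP k = of_int eps ^ n * (-1) ^ n * sg ^ k * t k"

lemma a_le: "\<bar>a\<bar> \<le> 1"
proof -
  have "\<bar>a\<bar> = of_int u * \<bar>of_int u * \<xi> - of_int v\<bar>" using u1 by (simp add: a_def abs_mult)
  also have "\<dots> \<le> of_int u * (1 / of_int u)" using d1 u1 by (intro mult_left_mono) auto
  also have "\<dots> = 1" using u1 by simp
  finally show ?thesis .
qed

lemma abs_eps: "\<bar>(of_int eps :: real)\<bar> = 1" using eps by auto

lemma abs_sP: "\<bar>sP k\<bar> = 1"
  by (simp add: sP_def abs_mult power_abs abs_eps t_def sg_def)

lemma tau0: "tau (Rt s) 0 = of_int eps ^ n * (-1) ^ n * (\<Sum>k\<le>n. 2 * c5 * s k * (- a) ^ k)"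
proof -
  have u0': "real_of_int u \<noteq> 0" using u1 by simp
  have "coeff (Phi (Rt s)) 0 = poly (Phi (Rt s)) 0" by (simp add: poly_0_coeff_0)
  also have "\<dots> = of_int u ^ n * poly (Rt s) (of_int v / of_int u)"
    using poly_Phi[OF degree_Rt, of 0 s] u0' by simp
  also have "\<dots> = (\<Sum>k\<le>n. 2 * c5 * s k * (- a) ^ k)"
  proof -
    have "of_int u ^ n * (W k * (of_int v / of_int u - \<xi>) ^ k) = (- a) ^ k" if k: "k \<le> n" for k
    proof -
      have un: "(of_int u :: real) ^ n = of_int u ^ k * of_int u ^ (n - k)"
        using k by (simp add: power_add[symmetric])
      have "of_int v / of_int u - \<xi> = - (of_int u * \<xi> - of_int v) / of_int u"
        using u0' by (simp add: field_simps)
      then have "(of_int v / of_int u - \<xi>) ^ k = (- (of_int u * \<xi> - of_int v)) ^ k / of_int u ^ k"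
        by (simp add: power_divide)
      then have "of_int u ^ n * (W k * (of_int v / of_int u - \<xi>) ^ k) =
          (of_int u ^ k * of_int u ^ (n - k)) * (of_int u ^ k * (1 / of_int u) ^ (n - k)) *
          ((- (of_int u * \<xi> - of_int v)) ^ k / of_int u ^ k)"
        unfolding un W_eq[OF k] by (simp add: mult_ac)
      also have "\<dots> = (of_int u ^ k * (- (of_int u * \<xi> - of_int v)) ^ k) *
          ((of_int u ^ (n - k) * (1 / of_int u) ^ (n - k)) * (of_int u ^ k / of_int u ^ k))"
        by (simp add: mult_ac)
      also have "\<dots> = (of_int u ^ k * (- (of_int u * \<xi> - of_int v)) ^ k)"
        using u0' by (simp add: power_one_over)
      also have "\<dots> = (- a) ^ k"
      proof -
        have "of_int u * (- (of_int u * \<xi> - of_int v)) = - a" by (simp add: a_def algebra_simps)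
        then show ?thesis by (simp only: power_mult_distrib[symmetric])
      qed
      finally show ?thesis .
    qed
    then show ?thesis
      by (simp add: Rt_def poly_sum sum_distrib_left mult_ac)
  qed
  finally show ?thesis by (simp add: tau_def)
qed

lemma sg_a: "sg * (- a) = \<bar>a\<bar>"
  by (simp add: sg_def)

lemma tau0_sP: "tau (Rt sP) 0 = 2 * c5 * (\<Sum>k\<le>n. t k * \<bar>a\<bar> ^ k)"
proof -
  have e2: "(of_int eps :: real) ^ n * (-1) ^ n * (of_int eps ^ n * (-1) ^ n) = 1"
  proof -
    have "(of_int eps :: real) ^ n * (-1) ^ n * (of_int eps ^ n * (-1) ^ n) =
       (of_int eps ^ n * of_int eps ^ n) * ((-1) ^ n * (-1) ^ n)" by (simp only: mult_ac)
    also have "\<dots> = 1" using eps_pow2 by (simp add: power_mult_distrib[symmetric])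
    finally show ?thesis .
  qed
  have trm: "sP k * (- a) ^ k = of_int eps ^ n * (-1) ^ n * (t k * \<bar>a\<bar> ^ k)" for k
    unfolding sP_def sg_a[symmetric] power_mult_distrib by (simp only: mult_ac)
  have "tau (Rt sP) 0 = of_int eps ^ n * (-1) ^ n * (\<Sum>k\<le>n. 2 * c5 * (sP k * (- a) ^ k))"
    unfolding tau0 by (simp only: mult_ac)
  also have "\<dots> = (of_int eps ^ n * (-1) ^ n * (of_int eps ^ n * (-1) ^ n)) * (\<Sum>k\<le>n. 2 * c5 * (t k * \<bar>a\<bar> ^ k))"
    unfolding trm by (simp add: sum_distrib_left mult_ac)
  also have "\<dots> = 2 * c5 * (\<Sum>k\<le>n. t k * \<bar>a\<bar> ^ k)"
    unfolding e2 by (simp add: sum_distrib_left mult_ac)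
  finally show ?thesis .
qed

end


lemma pderiv_iter_zero: "degree R < k \<Longrightarrow> (pderiv ^^ k) (R::real poly) = 0"
proof (induction k arbitrary: R)
  case 0 then show ?case by simp
next
  case (Suc k)
  have e: "(pderiv ^^ Suc k) R = (pderiv ^^ k) (pderiv R)" by (simp add: funpow_Suc_right del: funpow.simps)
  show ?case
  proof (cases "degree R = 0")
    case True
    then have "pderiv R = 0" by (simp add: pderiv_eq_0_iff)
    then show ?thesis unfolding e by (simp add: pderiv_iter_0)
  next
    case False
    then have "degree (pderiv R) < k" using Suc.prems by (simp add: degree_pderiv)
    then show ?thesis unfolding e by (rule Suc.IH)
  qed
qed

lemma degree_from_dd: "degree R \<le> n \<Longrightarrow> dd R n x \<noteq> 0 \<Longrightarrow> degree R = n"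
proof (rule ccontr)
  assume "degree R \<le> n" "dd R n x \<noteq> 0" "degree R \<noteq> n"
  then have "degree R < n" by simp
  then have "(pderiv ^^ n) R = 0" by (rule pderiv_iter_zero)
  then show False using \<open>dd R n x \<noteq> 0\<close> by (simp add: dd_def)
qed

lemma ipoly_int: "ipoly R \<Longrightarrow> \<exists>Z. map_poly of_int Z = R"
  unfolding ipoly_def by (metis intpolyE)

lemma coeff_of_int_poly: "map_poly of_int Z = (R::real poly) \<Longrightarrow> coeff R i = of_int (coeff Z i)"
  by (auto simp: coeff_map_poly)

lemma degree_of_int_poly: "map_poly of_int Z = (R::real poly) \<Longrightarrow> degree Z = degree R"
  by (metis degree_map_poly of_int_eq_0_iff)

context cfapprox
begin

lemma sign_sq: "(of_int eps ^ n * (-1) ^ (n - i) :: real) * (of_int eps ^ n * (-1) ^ (n - i)) = 1"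
proof -
  have "(of_int eps ^ n * (-1) ^ (n - i) :: real) * (of_int eps ^ n * (-1) ^ (n - i)) =
     (of_int eps ^ n * of_int eps ^ n) * ((-1) ^ (n - i) * (-1) ^ (n - i))" by (simp only: mult_ac)
  also have "\<dots> = 1" using eps_pow2 by (simp add: power_mult_distrib[symmetric])
  finally show ?thesis .
qed

lemma content_dvd:
  assumes Z: "map_poly of_int Z = Pol (\<lambda>i. of_int (EZ i))" and c: "\<And>l. c dvd coeff Z l" and i: "i \<le> n"
  shows "c dvd EZ i"
proof -
  have "\<exists>z::int. coeff (Pol (\<lambda>i. of_int (EZ i))) l = of_int c * of_int z" for l
  proof -
    obtain z where "coeff Z l = c * z" using c[of l] by (auto elim!: dvdE)
    then show ?thesis using coeff_of_int_poly[OF Z, of l] by auto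
  qed
  then obtain z :: int where z: "coeff (Phi (Pol (\<lambda>i. of_int (EZ i)))) i = of_int c * of_int z"
    using Phi_dvd by blast
  have "coeff (Phi (Pol (\<lambda>i. of_int (EZ i)))) i = of_int eps ^ n * (-1) ^ (n - i) * of_int (EZ i)"
    unfolding Pol_def by (rule coeff_Phi_Bsum[OF i])
  then have h: "of_int eps ^ n * (-1) ^ (n - i) * of_int (EZ i) = (of_int c * of_int z :: real)" using z by simp
  have inv: "e = s * w" if "s * s = 1" "s * e = w" for s e w :: real
    using that by (metis mult.assoc mult_1)
  have "of_int (EZ i) = (of_int eps ^ n * (-1) ^ (n - i)) * (of_int c * of_int z :: real)"
    by (rule inv[OF sign_sq h])
  then have "of_int (EZ i) = (of_int (c * (eps ^ n * (-1) ^ (n - i) * z)) :: real)"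
    by (simp add: mult_ac)
  then have "EZ i = c * (eps ^ n * (-1) ^ (n - i) * z)" by (simp only: of_int_eq_iff)
  then show ?thesis by simp
qed

definition rnd :: "real poly \<Rightarrow> real poly \<Rightarrow> nat set \<Rightarrow> nat \<Rightarrow> int" where
  "rnd F0 R S i = \<lfloor>tau F0 i\<rfloor> + 4 * (\<lfloor>(tau R i - tau F0 i) / 4\<rfloor> + (if i \<in> S then 1 else 0))"

definition rndG :: "real poly \<Rightarrow> real poly \<Rightarrow> nat set \<Rightarrow> nat \<Rightarrow> int" where
  "rndG F0 R S i = \<lfloor>(tau R i - tau F0 i) / 4\<rfloor> + (if i \<in> S then 1 else 0)"

lemma rnd_close:
  assumes F0: "ipoly F0"
  shows "\<bar>of_int (rnd F0 R S i) - tau R i\<bar> \<le> 4"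
proof -
  have e: "of_int \<lfloor>tau F0 i\<rfloor> = tau F0 i" using tau_int[OF F0, of i] by (metis Ints_cases floor_of_int)
  let ?y = "(tau R i - tau F0 i) / 4"
  have f1: "of_int \<lfloor>?y\<rfloor> \<le> ?y" and f2: "?y < of_int \<lfloor>?y\<rfloor> + 1" by linarith+
  show ?thesis unfolding rnd_def using f1 f2 e by (auto simp: abs_le_iff field_simps)
qed

lemma rnd_split:
  assumes F0: "ipoly F0" and dF0: "degree F0 \<le> n"
  shows "Pol (\<lambda>i. of_int (rnd F0 R S i)) = F0 + smult 4 (Pol (\<lambda>i. of_int (rndG F0 R S i)))"
proof -
  have e: "of_int \<lfloor>tau F0 i\<rfloor> = tau F0 i" for i using tau_int[OF F0, of i] by (metis Ints_cases floor_of_int)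
  have "Pol (\<lambda>i. of_int (rnd F0 R S i)) = Pol (\<lambda>i. tau F0 i + 4 * of_int (rndG F0 R S i))"
    unfolding rnd_def rndG_def by (simp add: e)
  also have "\<dots> = Pol (tau F0) + smult 4 (Pol (\<lambda>i. of_int (rndG F0 R S i)))"
    by (simp add: Pol_add Pol_smult)
  also have "Pol (tau F0) = F0" by (rule Pol_tau[OF dF0])
  finally show ?thesis .
qed

lemma Pol_int_ipoly: "ipoly (Pol (\<lambda>i. of_int (EZ i)))"
  by (rule ipoly_Pol) auto

lemma dd_Pol_split:
  assumes R: "degree R \<le> n"
  shows "dd (Pol E) k \<xi> = dd R k \<xi> + dd (Pol (\<lambda>i. E i - tau R i)) k \<xi>"
proof -
  have "Pol E = R + Pol (\<lambda>i. E i - tau R i)"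
    using Pol_diff[of E "tau R"] Pol_tau[OF R] by (metis add_diff_cancel_left' diff_add_cancel)
  then show ?thesis by (simp add: dd_add)
qed

end


context cfapprox
begin

definition F0P :: "real poly" where "F0P = monom 1 n + [:2:]"

lemma ipoly_F0P: "ipoly F0P"
  unfolding F0P_def by (intro ipoly_add ipoly_monom ipoly_pCons ipoly_0) auto

lemma degree_F0P: "degree F0P \<le> n"
  unfolding F0P_def using n1
  by (intro degree_add_le) (auto simp: degree_monom_le)

lemma coeff_F0P: "coeff F0P i = (if i = n then 1 else 0) + (if i = 0 then 2 else 0)"
  by (cases i) (auto simp: F0P_def coeff_monom)

definition EP :: "nat set \<Rightarrow> nat \<Rightarrow> int" where "EP S = rnd F0P (Rt sP) S"
definition PR :: "nat set \<Rightarrow> real poly" where "PR S = Pol (\<lambda>i. of_int (EP S i))"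
definition PZ :: "nat set \<Rightarrow> int poly" where "PZ S = (SOME Z. map_poly of_int Z = PR S)"

lemma PZ_map: "map_poly of_int (PZ S) = PR S"
proof -
  have "\<exists>Z. map_poly of_int Z = PR S" unfolding PR_def by (rule ipoly_int[OF Pol_int_ipoly])
  then show ?thesis unfolding PZ_def by (rule someI_ex)
qed

lemma c5_pos: "c5 > 0" by (simp add: c5_def)

lemma PR_bounds:
  assumes k: "k \<le> n"
  shows "c5 * W k \<le> \<bar>dd (PR S) k \<xi>\<bar> \<and> \<bar>dd (PR S) k \<xi>\<bar> \<le> 3 * c5 * W k"
proof (rule approx_main[OF _ abs_sP k])
  show "\<bar>of_int (EP S i) - tau (Rt sP) i\<bar> \<le> 4" for i
    unfolding EP_def by (rule rnd_close[OF ipoly_F0P])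
  show "dd (PR S) k \<xi> = dd (Rt sP) k \<xi> + dd (Pol (\<lambda>i. of_int (EP S i) - tau (Rt sP) i)) k \<xi>"
    unfolding PR_def by (rule dd_Pol_split[OF degree_Rt])
qed

lemma PR_degree: "degree (PR S) = n"
proof (rule degree_from_dd)
  show "degree (PR S) \<le> n" unfolding PR_def by (rule degree_Pol)
  have "c5 * W n > 0" using c5_pos W_pos[of n] by simp
  then show "dd (PR S) n \<xi> \<noteq> 0" using PR_bounds[of n S] by auto
qed

lemma PZ_degree: "degree (PZ S) = n"
  using degree_of_int_poly[OF PZ_map] PR_degree by simp

lemma PZ_coeff: "\<exists>z. coeff (PZ S) i = (if i = n then 1 else 0) + (if i = 0 then 2 else 0) + 4 * z"
proof -
  have "PR S = F0P + smult 4 (Pol (\<lambda>i. of_int (rndG F0P (Rt sP) S i)))"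
    unfolding PR_def EP_def by (rule rnd_split[OF ipoly_F0P degree_F0P])
  then have c: "coeff (PR S) i = coeff F0P i + 4 * coeff (Pol (\<lambda>i. of_int (rndG F0P (Rt sP) S i))) i"
    by simp
  have "coeff (Pol (\<lambda>i. of_int (rndG F0P (Rt sP) S i))) i \<in> \<int>"
    using Pol_int_ipoly by (auto simp: ipoly_def)
  then obtain z where z: "coeff (Pol (\<lambda>i. of_int (rndG F0P (Rt sP) S i))) i = of_int z"
    by (auto elim!: Ints_cases)
  have h: "(of_int (coeff (PZ S) i) :: real) = (if i = n then 1 else 0) + (if i = 0 then 2 else 0) + 4 * of_int z"
    using coeff_of_int_poly[OF PZ_map, of S i] c z coeff_F0P[of i] by simp
  have h2: "(of_int ((if i = n then 1 else 0) + (if i = 0 then 2 else 0) + 4 * z) :: real) =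
     (if i = n then 1 else 0) + (if i = 0 then 2 else 0) + 4 * of_int z" by simp
  have "(of_int (coeff (PZ S) i) :: real) = of_int ((if i = n then 1 else 0) + (if i = 0 then 2 else 0) + 4 * z)"
    using h h2 by simp
  then show ?thesis by (intro exI[of _ z]) (simp only: of_int_eq_iff)
qed

lemma PZ_odd: "odd (coeff (PZ S) n)"
proof -
  obtain z where "coeff (PZ S) n = 1 + 4 * z" using PZ_coeff[of S n] n1 by auto
  then show ?thesis by presburger
qed

lemma PZ_mid: "1 \<le> i \<Longrightarrow> i < n \<Longrightarrow> even (coeff (PZ S) i)"
proof -
  assume "1 \<le> i" "i < n"
  then obtain z where "coeff (PZ S) i = 4 * z" using PZ_coeff[of S i] by auto
  then show ?thesis by presburger
qed

lemma PZ_c0: "coeff (PZ S) 0 mod 4 = 2"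
proof -
  obtain z where "coeff (PZ S) 0 = 2 + 4 * z" using PZ_coeff[of S 0] n1 by auto
  then show ?thesis by presburger
qed

lemma rnd_lo_hi:
  assumes F0: "ipoly F0" and i: "i \<notin> S"
  shows "tau R i - 4 < of_int (rnd F0 R S i) \<and> of_int (rnd F0 R S i) \<le> tau R i"
proof -
  have e: "of_int \<lfloor>tau F0 i\<rfloor> = tau F0 i" using tau_int[OF F0, of i] by (metis Ints_cases floor_of_int)
  let ?y = "(tau R i - tau F0 i) / 4"
  have f1: "of_int \<lfloor>?y\<rfloor> \<le> ?y" and f2: "?y < of_int \<lfloor>?y\<rfloor> + 1" by linarith+
  show ?thesis unfolding rnd_def using f1 f2 e i by (auto simp: field_simps)
qed

lemma tau0_bounds:
  assumes n2: "n \<ge> 2"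
  shows "2 * c5 \<le> tau (Rt sP) 0 \<and> tau (Rt sP) 0 \<le> 2 * c5 * (real n - 3/4)"
proof -
  have S: "1 \<le> (\<Sum>k\<le>n. t k * \<bar>a\<bar> ^ k) \<and> (\<Sum>k\<le>n. t k * \<bar>a\<bar> ^ k) \<le> real n - 3/4"
    using S_bounds[of "\<bar>a\<bar>" n] a_le n2 by (simp add: t_def)
  show ?thesis unfolding tau0_sP using S c5_pos by simp
qed

lemma x_bounds:
  assumes n2: "n \<ge> 2"
  shows "0 < EP {} 0 \<and> EP {} 0 < 3 ^ (2 ^ n)"
proof -
  have lh: "tau (Rt sP) 0 - 4 < of_int (EP {} 0) \<and> of_int (EP {} 0) \<le> tau (Rt sP) 0"
    unfolding EP_def by (rule rnd_lo_hi[OF ipoly_F0P]) simp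
  have c8: "c5 \<ge> 8"
  proof -
    have "real (n + 1) \<ge> 1" by simp
    moreover have "(2::real) ^ (n + 1) \<ge> 2 ^ 3" using n2 by (intro power_increasing) auto
    ultimately have "real (n + 1) * 2 ^ (n + 1) \<ge> 1 * 2 ^ 3"
      by (intro mult_mono) auto
    then show ?thesis by (simp add: c5_def)
  qed
  have "(of_int (EP {} 0) :: real) > 0" using lh tau0_bounds[OF n2] c8 by linarith
  then have pos: "EP {} 0 > 0" by simp
  have "(of_int (EP {} 0) :: real) \<le> 2 * c5 * (real n - 3/4)" using lh tau0_bounds[OF n2] by linarith
  also have "2 * c5 * (real n - 3/4) = real ((n + 1) * (4 * n - 3) * 2 ^ n)"
  proof -
    have a1: "real (4 * n - 3) = 4 * real n - 3" using n2 by simp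
    have a2: "real ((n + 1) * (4 * n - 3) * 2 ^ n) = real (n + 1) * real (4 * n - 3) * 2 ^ n"
      by (simp only: of_nat_mult of_nat_power of_nat_numeral)
    show ?thesis unfolding a2 a1 c5_def by (simp add: algebra_simps power_add)
  qed
  also have "\<dots> < real (3 ^ (2 ^ n))" using numeric_bound[OF n2] by (simp only: of_nat_less_iff)
  finally have "(of_int (EP {} 0) :: real) < of_int (3 ^ (2 ^ n))" by simp
  then have "EP {} 0 < 3 ^ (2 ^ n)" by (simp only: of_int_less_iff)
  then show ?thesis using pos by simp
qed

lemma EP_0: "0 \<notin> S \<Longrightarrow> EP S 0 = EP {} 0"
  by (simp add: EP_def rnd_def)

lemma EP_diff: "EP S i - EP T i = 4 * ((if i \<in> S then 1 else 0) - (if i \<in> T then 1 else 0))"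
  by (simp add: EP_def rnd_def algebra_simps)

lemma prim_exists:
  assumes n2: "n \<ge> 2"
  shows "\<exists>S. S \<subseteq> {1..n} \<and> (\<forall>c. (\<forall>i. c dvd coeff (PZ S) i) \<longrightarrow> is_unit c)"
proof (rule ccontr)
  assume H: "\<not> ?thesis"
  define I where "I = Pow {1..n}"
  have "\<forall>S\<in>I. \<exists>c. (\<forall>i. c dvd coeff (PZ S) i) \<and> \<not> is_unit c" using H by (auto simp: I_def)
  then obtain cf where cf: "\<And>S. S \<in> I \<Longrightarrow> (\<forall>i. cf S dvd coeff (PZ S) i) \<and> \<not> is_unit (cf S)" by metis
  define f where "f S = \<bar>cf S\<bar>" for S
  define x where "x = EP {} 0"
  have fdvd: "f S dvd coeff (PZ S) i" if "S \<in> I" for S i using cf[OF that] by (simp add: f_def)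
  have x_eq: "EP S 0 = x" if "S \<in> I" for S
  proof -
    have "0 \<notin> S" using that by (auto simp: I_def)
    then show ?thesis using EP_0[of S] by (simp add: x_def)
  qed
  have f_dvd_x: "f S dvd x" if S: "S \<in> I" for S
    using content_dvd[OF PZ_map[unfolded PR_def] fdvd[OF S], of 0] x_eq[OF S] by simp
  have f3: "f S \<ge> 3" if S: "S \<in> I" for S
  proof -
    have od: "odd (coeff (PZ S) n)" by (rule PZ_odd)
    have d: "f S dvd coeff (PZ S) n" by (rule fdvd[OF S])
    have "f S \<noteq> 0" using d od by auto
    moreover have "f S \<noteq> 1" using cf[OF S] by (simp add: f_def)
    moreover have "odd (f S)" using d od by (metis dvd_trans)
    moreover have "f S \<ge> 0" by (simp add: f_def)
    ultimately show ?thesis by presburger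
  qed
  have cop: "coprime (f S) (f T)" if S: "S \<in> I" and T: "T \<in> I" and ST: "S \<noteq> T" for S T
  proof -
    define g where "g = gcd (f S) (f T)"
    have gS: "g dvd coeff (PZ S) i" for i unfolding g_def by (rule dvd_trans[OF gcd_dvd1 fdvd[OF S]])
    have gT: "g dvd coeff (PZ T) i" for i unfolding g_def by (rule dvd_trans[OF gcd_dvd2 fdvd[OF T]])
    have "\<exists>j. (j \<in> S) \<noteq> (j \<in> T)" using ST by blast
    then obtain j where j2: "(j \<in> S) \<noteq> (j \<in> T)" by blast
    then have j1: "j \<in> {1..n}" using S T by (auto simp: I_def)
    note j = j1 j2
    have "g dvd EP S j" by (rule content_dvd[OF PZ_map[unfolded PR_def] gS]) (use j in auto)
    moreover have "g dvd EP T j" by (rule content_dvd[OF PZ_map[unfolded PR_def] gT]) (use j in auto)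
    ultimately have "g dvd EP S j - EP T j" by (rule dvd_diff)
    moreover have "EP S j - EP T j = 4 \<or> EP S j - EP T j = -4" using EP_diff[of S j T] j by auto
    ultimately have g4: "g dvd 4" by auto
    have gpos: "g \<ge> 0" by (simp add: g_def)
    have godd: "odd g" using gS[of n] PZ_odd[of S] by (metis dvd_trans)
    have "g \<le> 4" using g4 by (simp add: zdvd_imp_le)
    then have "g = 1 \<or> g = 3" using gpos godd by presburger
    then have "g = 1" using g4 by auto
    then show ?thesis by (simp add: g_def coprime_iff_gcd_eq_1)
  qed
  have fin: "finite I" by (simp add: I_def)
  have xb: "0 < x \<and> x < 3 ^ (2 ^ n)" using x_bounds[OF n2] by (simp add: x_def)
  have "3 ^ card I \<le> x"
    by (rule count_bound[OF fin f_dvd_x f3 cop]) (use xb in auto)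
  moreover have "card I = 2 ^ n" by (simp add: I_def card_Pow)
  ultimately show False using xb by simp
qed

lemma P_exists_ge2:
  assumes n2: "n \<ge> 2"
  shows "\<exists>P. irreducible P \<and> degree P = n \<and>
     (\<forall>k\<le>n. c5 * W k \<le> \<bar>dd (map_poly of_int P) k \<xi>\<bar> \<and> \<bar>dd (map_poly of_int P) k \<xi>\<bar> \<le> 3 * c5 * W k)"
proof -
  obtain S where S: "\<forall>c. (\<forall>i. c dvd coeff (PZ S) i) \<longrightarrow> is_unit c" using prim_exists[OF n2] by blast
  have "irreducible (PZ S)"
  proof (rule irreducible_intP)
    show "degree (PZ S) \<ge> 1" using PZ_degree n1 by simp
    show "is_unit c" if "\<And>i. c dvd coeff (PZ S) i" for c using S that by blast
    show "degree A = 0 \<or> degree B = 0" if "PZ S = A * B" for A B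
      by (rule eisenstein_nofact[OF PZ_degree n1 PZ_odd PZ_mid PZ_c0 that])
  qed
  then show ?thesis using PZ_degree PR_bounds PZ_map by metis
qed

end


context cfapprox
begin

lemma tau0_n1: "n = 1 \<Longrightarrow> tau (Rt sP) 0 = 16 * (1 + \<bar>a\<bar>)"
proof -
  assume n: "n = 1"
  have c: "c5 = 8" unfolding c5_def using n by simp
  have s: "(\<Sum>k\<le>n. t k * \<bar>a\<bar> ^ k) = 1 + \<bar>a\<bar>" using n by (simp add: t_def)
  show ?thesis unfolding tau0_sP c s by simp
qed

definition p0 :: int where
  "p0 = (if tau (Rt sP) 0 \<le> 21 then 17 else if tau (Rt sP) 0 \<le> 27 then 23 else 29)"
definition E1 :: int where
  "E1 = (if p0 dvd \<lfloor>tau (Rt sP) 1\<rfloor> then \<lfloor>tau (Rt sP) 1\<rfloor> + 1 else \<lfloor>tau (Rt sP) 1\<rfloor>)"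
definition EN1 :: "nat \<Rightarrow> int" where "EN1 i = (if i = 0 then p0 else E1)"
definition PR1 :: "real poly" where "PR1 = Pol (\<lambda>i. of_int (EN1 i))"
definition PZ1 :: "int poly" where "PZ1 = (SOME Z. map_poly of_int Z = PR1)"

lemma PZ1_map: "map_poly of_int PZ1 = PR1"
proof -
  have "\<exists>Z. map_poly of_int Z = PR1" unfolding PR1_def by (rule ipoly_int[OF Pol_int_ipoly])
  then show ?thesis unfolding PZ1_def by (rule someI_ex)
qed

lemma p0_prime: "prime p0"
  by (simp add: p0_def)

lemma p0_close: "n = 1 \<Longrightarrow> \<bar>of_int p0 - tau (Rt sP) 0\<bar> \<le> 4"
proof -
  assume n: "n = 1"
  have "16 \<le> tau (Rt sP) 0" "tau (Rt sP) 0 \<le> 32" using tau0_n1[OF n] a_le by auto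
  then show ?thesis by (auto simp: p0_def)
qed

lemma E1_close: "\<bar>of_int E1 - tau (Rt sP) 1\<bar> \<le> 4"
proof -
  define y where "y = tau (Rt sP) 1"
  have e: "E1 = (if p0 dvd \<lfloor>y\<rfloor> then \<lfloor>y\<rfloor> + 1 else \<lfloor>y\<rfloor>)" by (simp add: E1_def y_def)
  have f1: "of_int \<lfloor>y\<rfloor> \<le> y" and f2: "y < of_int \<lfloor>y\<rfloor> + 1" by linarith+
  have g: "(of_int E1 :: real) = of_int \<lfloor>y\<rfloor> \<or> (of_int E1 :: real) = of_int \<lfloor>y\<rfloor> + 1"
    unfolding e by auto
  have "\<bar>of_int E1 - y\<bar> \<le> 4" unfolding abs_le_iff using g f1 f2 by linarith
  then show ?thesis by (simp add: y_def)
qed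

lemma E1_ndvd: "\<not> p0 dvd E1"
proof -
  have p2: "p0 \<ge> 2" by (simp add: p0_def)
  show ?thesis
  proof (cases "p0 dvd \<lfloor>tau (Rt sP) 1\<rfloor>")
    case True
    then have "E1 = \<lfloor>tau (Rt sP) 1\<rfloor> + 1" by (simp add: E1_def)
    moreover have "\<not> p0 dvd \<lfloor>tau (Rt sP) 1\<rfloor> + 1"
    proof
      assume "p0 dvd \<lfloor>tau (Rt sP) 1\<rfloor> + 1"
      then have "p0 dvd (\<lfloor>tau (Rt sP) 1\<rfloor> + 1) - \<lfloor>tau (Rt sP) 1\<rfloor>" using True by (rule dvd_diff)
      then have "p0 dvd 1" by simp
      then show False using p2 by simp
    qed
    ultimately show ?thesis by simp
  next
    case False then show ?thesis by (simp add: E1_def)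
  qed
qed

lemma PR1_bounds:
  assumes n: "n = 1" and k: "k \<le> n"
  shows "c5 * W k \<le> \<bar>dd PR1 k \<xi>\<bar> \<and> \<bar>dd PR1 k \<xi>\<bar> \<le> 3 * c5 * W k"
proof (rule approx_main[OF _ abs_sP k])
  show "\<bar>of_int (EN1 i) - tau (Rt sP) i\<bar> \<le> 4" if "i \<le> n" for i
  proof -
    have "i = 0 \<or> i = 1" using that n by auto
    then show ?thesis
    proof
      assume i: "i = 0"
      show ?thesis unfolding i EN1_def using p0_close[OF n] by simp
    next
      assume i: "i = 1"
      show ?thesis unfolding i EN1_def using E1_close by simp
    qed
  qed
  show "dd PR1 k \<xi> = dd (Rt sP) k \<xi> + dd (Pol (\<lambda>i. of_int (EN1 i) - tau (Rt sP) i)) k \<xi>"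
    unfolding PR1_def by (rule dd_Pol_split[OF degree_Rt])
qed

lemma PZ1_degree: "n = 1 \<Longrightarrow> degree PZ1 = n"
proof -
  assume n: "n = 1"
  have "degree PR1 = n"
  proof (rule degree_from_dd)
    show "degree PR1 \<le> n" unfolding PR1_def by (rule degree_Pol)
    have "c5 * W n > 0" using c5_pos W_pos[of n] by simp
    then show "dd PR1 n \<xi> \<noteq> 0" using PR1_bounds[OF n, of n] by auto
  qed
  then show ?thesis using degree_of_int_poly[OF PZ1_map] by simp
qed

lemma P_exists_1:
  assumes n: "n = 1"
  shows "\<exists>P. irreducible P \<and> degree P = n \<and>
     (\<forall>k\<le>n. c5 * W k \<le> \<bar>dd (map_poly of_int P) k \<xi>\<bar> \<and> \<bar>dd (map_poly of_int P) k \<xi>\<bar> \<le> 3 * c5 * W k)"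
proof -
  have "irreducible PZ1"
  proof (rule irreducible_intP)
    show "degree PZ1 \<ge> 1" using PZ1_degree[OF n] n by simp
    show "is_unit c" if c: "\<And>i. c dvd coeff PZ1 i" for c
    proof -
      have "c dvd EN1 0" by (rule content_dvd[OF PZ1_map[unfolded PR1_def] c]) simp
      then have c0: "\<bar>c\<bar> dvd p0" by (simp add: EN1_def)
      have "c dvd EN1 1" by (rule content_dvd[OF PZ1_map[unfolded PR1_def] c]) (simp add: n)
      then have c1: "\<bar>c\<bar> dvd E1" by (simp add: EN1_def)
      have "\<bar>c\<bar> = 1 \<or> \<bar>c\<bar> = p0" using p0_prime c0 by (simp add: prime_int_iff)
      then show ?thesis
      proof
        assume "\<bar>c\<bar> = 1" then show ?thesis by simp
      next
        assume "\<bar>c\<bar> = p0" then have "p0 dvd E1" using c1 by simp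
        then show ?thesis using E1_ndvd by simp
      qed
    qed
    show "degree A = 0 \<or> degree B = 0" if "PZ1 = A * B" for A B
      using deg1_nofact[OF _ that] PZ1_degree[OF n] n by simp
  qed
  then show ?thesis using PZ1_degree[OF n] PR1_bounds[OF n] PZ1_map by metis
qed

end


context cfapprox
begin

definition F0Q :: "real poly" where "F0Q = [:2:]"
definition RQ :: "real poly" where "RQ = Rt (\<lambda>_. 1) + [:-\<xi>, 1:] ^ (n + 1) - monom 1 (n + 1)"
definition EQ :: "nat \<Rightarrow> int" where "EQ = rnd F0Q RQ {}"
definition QR :: "real poly" where "QR = monom 1 (n + 1) + Pol (\<lambda>i. of_int (EQ i))"
definition QZ :: "int poly" where "QZ = (SOME Z. map_poly of_int Z = QR)"

lemma ipoly_F0Q: "ipoly F0Q" unfolding F0Q_def by (intro ipoly_pCons ipoly_0) auto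
lemma degree_F0Q: "degree F0Q \<le> n" by (simp add: F0Q_def)

lemma degree_RQ: "degree RQ \<le> n"
proof -
  have d: "degree ([:-\<xi>, 1:] ^ (n + 1) - monom 1 (n + 1)) \<le> n"
  proof (rule degree_le)
    show "\<forall>i>n. coeff ([:-\<xi>, 1:] ^ (n + 1) - monom 1 (n + 1)) i = 0"
    proof (intro allI impI)
      fix i assume i: "n < i"
      show "coeff ([:-\<xi>, 1:] ^ (n + 1) - monom 1 (n + 1)) i = 0"
      proof (cases "i = n + 1")
        case True
        have h1: "coeff ([:-\<xi>, 1:] ^ (n + 1)) (n + 1) = 1" by (rule coeff_linear_power)
        have h2: "coeff (monom (1::real) (n + 1)) (n + 1) = 1" by (simp only: coeff_monom refl if_True)
        show ?thesis unfolding True coeff_diff h1 h2 by simp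
      next
        case False
        then have "i > n + 1" using i by simp
        have dl: "degree ([:-\<xi>, 1:] ^ (n + 1)) = n + 1" by (rule degree_linear_power)
        have "coeff ([:-\<xi>, 1:] ^ (n + 1)) i = 0"
          by (rule coeff_eq_0) (use dl \<open>i > n + 1\<close> in simp)
        then show ?thesis using False by (simp add: coeff_monom)
      qed
    qed
  qed
  have e: "RQ = Rt (\<lambda>_. 1) + ([:-\<xi>, 1:] ^ (n + 1) - monom 1 (n + 1))"
    unfolding RQ_def by (simp only: add_diff_eq)
  show ?thesis unfolding e by (rule degree_add_le[OF degree_Rt d])
qed

lemma QZ_map: "map_poly of_int QZ = QR"
proof -
  have "ipoly QR" unfolding QR_def by (intro ipoly_add ipoly_monom Pol_int_ipoly) auto
  then have "\<exists>Z. map_poly of_int Z = QR" by (rule ipoly_int)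
  then show ?thesis unfolding QZ_def by (rule someI_ex)
qed

lemma QR_bounds:
  assumes k: "k \<le> n"
  shows "c5 * W k \<le> \<bar>dd QR k \<xi>\<bar> \<and> \<bar>dd QR k \<xi>\<bar> \<le> 3 * c5 * W k"
proof (rule approx_main[where s = "\<lambda>_. 1", OF _ _ k])
  show "\<bar>of_int (EQ i) - tau RQ i\<bar> \<le> 4" for i
    unfolding EQ_def by (rule rnd_close[OF ipoly_F0Q])
  show "\<bar>(\<lambda>_. 1::real) k\<bar> = 1" by simp
  have "dd QR k \<xi> = dd (monom 1 (n + 1)) k \<xi> + dd (Pol (\<lambda>i. of_int (EQ i))) k \<xi>"
    unfolding QR_def dd_add ..
  also have "dd (Pol (\<lambda>i. of_int (EQ i))) k \<xi> = dd RQ k \<xi> + dd (Pol (\<lambda>i. of_int (EQ i) - tau RQ i)) k \<xi>"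
    by (rule dd_Pol_split[OF degree_RQ])
  also have "dd RQ k \<xi> = dd (Rt (\<lambda>_. 1)) k \<xi> + dd ([:-\<xi>, 1:] ^ (n + 1)) k \<xi> - dd (monom 1 (n + 1)) k \<xi>"
    unfolding RQ_def dd_diff dd_add ..
  also have "dd ([:-\<xi>, 1:] ^ (n + 1)) k \<xi> = 0" unfolding dd_lin_power using k by simp
  finally show "dd QR k \<xi> = dd (Rt (\<lambda>_. 1)) k \<xi> + dd (Pol (\<lambda>i. of_int (EQ i) - tau RQ i)) k \<xi>"
    by simp
qed

lemma coeff_Pol_high: "i > n \<Longrightarrow> coeff (Pol E) i = 0"
  using degree_Pol[of E] by (intro coeff_eq_0) simp

lemma QR_degree: "degree QR = n + 1"
proof -
  have "degree (Pol (\<lambda>i. of_int (EQ i))) < degree (monom (1::real) (n + 1))"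
    using degree_Pol[of "\<lambda>i. of_int (EQ i)"] by (simp add: degree_monom_eq)
  then show ?thesis unfolding QR_def by (simp add: degree_add_eq_left degree_monom_eq)
qed

lemma QZ_degree: "degree QZ = n + 1"
  using degree_of_int_poly[OF QZ_map] QR_degree by simp

lemma QZ_lead: "lead_coeff QZ = 1"
proof -
  have "coeff QR (n + 1) = 1" unfolding QR_def using coeff_Pol_high[of "n + 1"] by simp
  then show ?thesis using coeff_of_int_poly[OF QZ_map, of "n + 1"] QZ_degree by simp
qed

lemma QZ_coeff: "\<exists>z. coeff QZ i = (if i = n + 1 then 1 else 0) + (if i = 0 then 2 else 0) + 4 * z"
proof -
  have "QR = monom 1 (n + 1) + (F0Q + smult 4 (Pol (\<lambda>i. of_int (rndG F0Q RQ {} i))))"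
    unfolding QR_def EQ_def by (simp only: rnd_split[OF ipoly_F0Q degree_F0Q])
  then have c: "coeff QR i = coeff (monom 1 (n + 1)) i + coeff F0Q i + 4 * coeff (Pol (\<lambda>i. of_int (rndG F0Q RQ {} i))) i"
    by simp
  have "coeff (Pol (\<lambda>i. of_int (rndG F0Q RQ {} i))) i \<in> \<int>"
    using Pol_int_ipoly by (auto simp: ipoly_def)
  then obtain z where z: "coeff (Pol (\<lambda>i. of_int (rndG F0Q RQ {} i))) i = of_int z"
    by (auto elim!: Ints_cases)
  have cF: "coeff F0Q i = (if i = 0 then 2 else 0)" by (cases i) (auto simp: F0Q_def)
  have cM: "coeff (monom (1::real) (n + 1)) i = (if i = n + 1 then 1 else 0)" by (simp add: coeff_monom)
  have h: "(of_int (coeff QZ i) :: real) = (if i = n + 1 then 1 else 0) + (if i = 0 then 2 else 0) + 4 * of_int z"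
    using coeff_of_int_poly[OF QZ_map, of i] c z cF cM by simp
  have h2: "(of_int ((if i = n + 1 then 1 else 0) + (if i = 0 then 2 else 0) + 4 * z) :: real) =
     (if i = n + 1 then 1 else 0) + (if i = 0 then 2 else 0) + 4 * of_int z" by simp
  have "(of_int (coeff QZ i) :: real) = of_int ((if i = n + 1 then 1 else 0) + (if i = 0 then 2 else 0) + 4 * z)"
    using h h2 by simp
  then show ?thesis by (intro exI[of _ z]) (simp only: of_int_eq_iff)
qed

lemma Q_exists:
  "\<exists>Q. irreducible Q \<and> lead_coeff Q = 1 \<and> degree Q = n + 1 \<and>
     (\<forall>k\<le>n. c5 * W k \<le> \<bar>dd (map_poly of_int Q) k \<xi>\<bar> \<and> \<bar>dd (map_poly of_int Q) k \<xi>\<bar> \<le> 3 * c5 * W k)"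
proof -
  have "irreducible QZ"
  proof (rule irreducible_intP)
    show "degree QZ \<ge> 1" using QZ_degree by simp
    show "is_unit c" if "\<And>i. c dvd coeff QZ i" for c
      using that[of "n + 1"] QZ_lead QZ_degree by simp
    show "degree A = 0 \<or> degree B = 0" if AB: "QZ = A * B" for A B
    proof (rule eisenstein_nofact[OF QZ_degree _ _ _ _ AB])
      show "1 \<le> n + 1" by simp
      show "odd (coeff QZ (n + 1))" using QZ_lead QZ_degree by simp
      show "even (coeff QZ i)" if "1 \<le> i" "i < n + 1" for i
      proof -
        obtain z where z: "coeff QZ i = (if i = n + 1 then 1 else 0) + (if i = 0 then 2 else 0) + 4 * z"
          using QZ_coeff[of i] by blast
        then have "coeff QZ i = 4 * z" using that by simp
        then show ?thesis by presburger
      qed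
      show "coeff QZ 0 mod 4 = 2"
      proof -
        obtain z where z: "coeff QZ 0 = (if 0 = n + 1 then 1 else 0) + (if (0::nat) = 0 then 2 else 0) + 4 * z"
          using QZ_coeff[of 0] by blast
        then have "coeff QZ 0 = 2 + 4 * z" by simp
        then show ?thesis by presburger
      qed
    qed
  qed
  then show ?thesis using QZ_lead QZ_degree QR_bounds QZ_map by metis
qed

end


theorem proposition2:
  fixes \<xi> :: real and n :: nat and q :: int and m :: nat
  assumes "\<xi> \<notin> \<rat>" and "n \<ge> 1" and "q = cf_den \<xi> m"
  shows "\<exists>P Q :: int poly.
     irreducible P \<and> degree P = n \<and>
     irreducible Q \<and> lead_coeff Q = 1 \<and> degree Q = n + 1 \<and>
     (\<forall>k\<le>n.
        (real (n+1) * 2 ^ (n+1)) * real_of_int q powi (2 * int k - int n) \<le> \<bar>div_deriv P k \<xi>\<bar> \<and>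
        \<bar>div_deriv P k \<xi>\<bar> \<le> 3 * (real (n+1) * 2 ^ (n+1)) * real_of_int q powi (2 * int k - int n) \<and>
        (real (n+1) * 2 ^ (n+1)) * real_of_int q powi (2 * int k - int n) \<le> \<bar>div_deriv Q k \<xi>\<bar> \<and>
        \<bar>div_deriv Q k \<xi>\<bar> \<le> 3 * (real (n+1) * 2 ^ (n+1)) * real_of_int q powi (2 * int k - int n))"
proof -
  note x = assms(1)
  define u where "u = cfQ \<xi> (Suc m)"
  define u' where "u' = cfQ \<xi> m"
  define v where "v = cfP \<xi> (Suc m)"
  define v' where "v' = cfP \<xi> m"
  define eps :: int where "eps = (-1) ^ m"
  note ap = cf_approx[OF x, of m, folded u_def u'_def v_def v'_def]
  have q: "q = u" using assms(3) by (simp add: cf_den_cfQ u_def)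
  interpret cf: cfapprox v u v' u' eps n \<xi>
  proof unfold_locales
    show "u * v' - v * u' = eps" using ap(4) by (simp add: eps_def)
    show "eps = 1 \<or> eps = -1" by (simp add: eps_def minus_one_power_iff)
    show "u \<noteq> 0" using ap(1) by simp
    show "1 \<le> u" "0 \<le> u'" "u' \<le> u" using ap(1-3) .
    show "\<bar>real_of_int u * \<xi> - real_of_int v\<bar> \<le> 1 / real_of_int u" by (rule ap(5))
    show "\<bar>real_of_int u' * \<xi> - real_of_int v'\<bar> \<le> 1 / real_of_int u" by (rule ap(6))
    show "1 \<le> n" by (rule assms(2))
  qed
  have Pex: "\<exists>P. irreducible P \<and> degree P = n \<and>
     (\<forall>k\<le>n. cf.c5 * cf.W k \<le> \<bar>dd (map_poly of_int P) k \<xi>\<bar> \<and> \<bar>dd (map_poly of_int P) k \<xi>\<bar> \<le> 3 * cf.c5 * cf.W k)"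
  proof (cases "n = 1")
    case True then show ?thesis by (rule cf.P_exists_1)
  next
    case False then have "n \<ge> 2" using assms(2) by simp
    then show ?thesis by (rule cf.P_exists_ge2)
  qed
  then obtain P where P: "irreducible P" "degree P = n"
    "\<And>k. k \<le> n \<Longrightarrow> cf.c5 * cf.W k \<le> \<bar>dd (map_poly of_int P) k \<xi>\<bar> \<and> \<bar>dd (map_poly of_int P) k \<xi>\<bar> \<le> 3 * cf.c5 * cf.W k"
    by blast
  obtain Q where Q: "irreducible Q" "lead_coeff Q = 1" "degree Q = n + 1"
    "\<And>k. k \<le> n \<Longrightarrow> cf.c5 * cf.W k \<le> \<bar>dd (map_poly of_int Q) k \<xi>\<bar> \<and> \<bar>dd (map_poly of_int Q) k \<xi>\<bar> \<le> 3 * cf.c5 * cf.W k"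
    using cf.Q_exists by blast
  show ?thesis
  proof (intro exI conjI allI impI)
    show "irreducible P" "degree P = n" "irreducible Q" "lead_coeff Q = 1" "degree Q = n + 1"
      using P Q by auto
    fix k assume k: "k \<le> n"
    note PP = P(3)[OF k, unfolded cf.c5_def cf.W_def, folded q div_deriv_dd]
    note QQ = Q(4)[OF k, unfolded cf.c5_def cf.W_def, folded q div_deriv_dd]
    show "(real (n+1) * 2 ^ (n+1)) * real_of_int q powi (2 * int k - int n) \<le> \<bar>div_deriv P k \<xi>\<bar>"
      using PP by simp
    show "\<bar>div_deriv P k \<xi>\<bar> \<le> 3 * (real (n+1) * 2 ^ (n+1)) * real_of_int q powi (2 * int k - int n)"
      using PP by simp
    show "(real (n+1) * 2 ^ (n+1)) * real_of_int q powi (2 * int k - int n) \<le> \<bar>div_deriv Q k \<xi>\<bar>"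
      using QQ by simp
    show "\<bar>div_deriv Q k \<xi>\<bar> \<le> 3 * (real (n+1) * 2 ^ (n+1)) * real_of_int q powi (2 * int k - int n)"
      using QQ by simp
  qed
qed


end
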